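(* Let $X,Y,T$ be cellular spaces with $X$ and $T$ compact, let $r\ge0$, and let $a,b\colon X\to Y$ be maps with $a\overset{r}{\approx}b$. Then the maps $a\wedge\mathrm{id}_T,\ b\wedge\mathrm{id}_T\colon X\wedge T\to Y\wedge T$ satisfy $a\wedge\mathrm{id}_T\overset{r}{\approx}b\wedge\mathrm{id}_T$.
   Context: Cellular space = based CW complex; maps based. Strong similarity: $\langle W\rangle$ = free abelian group on a set $W$. $Y^X$ = based maps (compact-open), based at the constant map; $Y^X_a$ = path component of $a$; $V\mapsto V|_R$ restriction; $\mathcal F_n(X)$ = finite $R\subseteq X$ containing the basepoint with $|R|\le n+1$; $\langle Y^X\rangle^{(s)}=\{V:V|_R=0\ \forall R\in\mathcal F_{s-1}(X)\}$. For unbased $U,V$: $V^{(U)}$ = unbased maps; $\Xi^U(v)$ = constant map at $v$; for $U=\coprod_iU_i$ the combining product $\boxed{\sqcup}_i\langle w_i\rangle=\langle w\rangle$, $w|_{U_i}=w_i$, multilinear. For nonempty finite $E$: simplex $\Delta E$, faces $\Delta F$; layouts = sets $A$ of pairwise disjoint nonempty subsets; $\Delta[A]=\coprod_{F\in A}\Delta F$; $S\in\langle V^{(\Delta E)}\rangle$ fissile if $S|_{\Delta[A]}=\boxed{\sqcup}_{F\in A}S|_{\Delta F}$ for all layouts. $U\wr X=(U\times X)/(U\times\{x_0\})$, $\#^X(w)(u\wr x)=w(u)(x)$, $\langle (Y^X)^{(U)}\rangle^{(s)}_X=\langle\#^X\rangle^{-1}\langle Y^{U\wr X}\rangle^{(s)}$.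 $a\overset{r}{\approx}b$ iff for each nonempty finite $E$ there is a fissile $S\in\langle (Y^X_a)^{(\Delta E)}\rangle$ with $\langle\Xi^{\Delta E}(b)\rangle-S\in\langle (Y^X)^{(\Delta E)}\rangle^{(r+1)}_X$. *)

theory Defs
  imports "HOL-Analysis.Analysis" "HOL-Algebra.Free_Abelian_Groups"
begin

definition disk_set :: "nat \<Rightarrow> (nat \<Rightarrow> real) set" where
  "disk_set n = {x. (\<forall>i\<ge>n. x i = 0) \<and> (\<Sum>i<n. (x i)\<^sup>2) \<le> 1}"

definition open_disk_set :: "nat \<Rightarrow> (nat \<Rightarrow> real) set" where
  "open_disk_set n = {x. (\<forall>i\<ge>n. x i = 0) \<and> (\<Sum>i<n. (x i)\<^sup>2) < 1}"

definition sphere_set :: "nat \<Rightarrow> (nat \<Rightarrow> real) set" where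
  "sphere_set n = {x. (\<forall>i\<ge>n. x i = 0) \<and> (\<Sum>i<n. (x i)\<^sup>2) = 1}"

definition disk_top :: "nat \<Rightarrow> (nat \<Rightarrow> real) topology" where
  "disk_top n = subtopology (powertop_real UNIV) (disk_set n)"

text \<open>The simplex on a finite vertex set E (taken inside nat): barycentric coordinates.\<close>
definition simplex_set :: "nat set \<Rightarrow> (nat \<Rightarrow> real) set" where
  "simplex_set E = {t. (\<forall>i. i \<notin> E \<longrightarrow> t i = 0) \<and> (\<forall>i\<in>E. 0 \<le> t i) \<and> sum t E = 1}"

definition simplex_top :: "nat set \<Rightarrow> (nat \<Rightarrow> real) topology" where
  "simplex_top E = subtopology (powertop_real UNIV) (simplex_set E)"

text \<open>A CW structure: a set C of cells, each given by its dimension n and a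
  characteristic map from the closed n-disk.\<close>
definition open_cell :: "nat \<times> ((nat \<Rightarrow> real) \<Rightarrow> 'a) \<Rightarrow> 'a set" where
  "open_cell c = snd c ` open_disk_set (fst c)"

definition cw_structure :: "'a topology \<Rightarrow> (nat \<times> ((nat \<Rightarrow> real) \<Rightarrow> 'a)) set \<Rightarrow> bool" where
  "cw_structure X C \<longleftrightarrow>
     (\<forall>c\<in>C. continuous_map (disk_top (fst c)) X (snd c)) \<and>
     (\<forall>c\<in>C. homeomorphic_map (subtopology (powertop_real UNIV) (open_disk_set (fst c)))
                (subtopology X (open_cell c)) (snd c)) \<and>
     (\<Union>c\<in>C. open_cell c) = topspace X \<and>
     (\<forall>c\<in>C. \<forall>d\<in>C. open_cell c \<inter> open_cell d \<noteq> {} \<longrightarrow> c = d) \<and>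
     (\<forall>c\<in>C. snd c ` sphere_set (fst c) \<subseteq> (\<Union>d\<in>{d\<in>C. fst d < fst c}. open_cell d)) \<and>
     (\<forall>c\<in>C. finite {d\<in>C. open_cell d \<inter> snd c ` disk_set (fst c) \<noteq> {}}) \<and>
     (\<forall>U. U \<subseteq> topspace X \<longrightarrow>
        (closedin X U \<longleftrightarrow> (\<forall>c\<in>C. closedin (disk_top (fst c)) {x \<in> disk_set (fst c). snd c x \<in> U})))"

definition cw_complex :: "'a topology \<Rightarrow> bool" where
  "cw_complex X \<longleftrightarrow> Hausdorff_space X \<and> (\<exists>C. cw_structure X C)"

text \<open>Cellular space = based CW complex: the basepoint is a 0-cell.\<close>
definition cellular_space :: "'a topology \<Rightarrow> 'a \<Rightarrow> bool" where
  "cellular_space X x0 \<longleftrightarrow> Hausdorff_space X \<and>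
     (\<exists>C. cw_structure X C \<and> (\<exists>c\<in>C. fst c = 0 \<and> open_cell c = {x0}))"

definition based_map :: "'a topology \<Rightarrow> 'a \<Rightarrow> 'b topology \<Rightarrow> 'b \<Rightarrow> ('a \<Rightarrow> 'b) \<Rightarrow> bool" where
  "based_map X x0 Y y0 f \<longleftrightarrow> continuous_map X Y f \<and> f x0 = y0"

definition collapse_cls :: "'a set \<Rightarrow> 'a \<Rightarrow> 'a set" where
  "collapse_cls A x = (if x \<in> A then A else {x})"

definition quotient_top :: "'a topology \<Rightarrow> ('a \<Rightarrow> 'b) \<Rightarrow> 'b topology" where
  "quotient_top X q = topology (\<lambda>U. U \<subseteq> q ` topspace X \<and> openin X {x \<in> topspace X. q x \<in> U})"

definition collapse_top :: "'a topology \<Rightarrow> 'a set \<Rightarrow> 'a set topology" where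
  "collapse_top X A = quotient_top X (collapse_cls A)"

definition smash_base :: "'a topology \<Rightarrow> 'a \<Rightarrow> 'c topology \<Rightarrow> 'c \<Rightarrow> ('a \<times> 'c) set" where
  "smash_base X x0 T t0 = (topspace X \<times> {t0}) \<union> ({x0} \<times> topspace T)"

text \<open>Smash product X ^ T = (X x T)/(X v T), based at the collapsed wedge.\<close>
definition smash_top :: "'a topology \<Rightarrow> 'a \<Rightarrow> 'c topology \<Rightarrow> 'c \<Rightarrow> ('a \<times> 'c) set topology" where
  "smash_top X x0 T t0 = collapse_top (prod_topology X T) (smash_base X x0 T t0)"

definition smash_id_map ::
  "'a topology \<Rightarrow> 'a \<Rightarrow> 'b topology \<Rightarrow> 'b \<Rightarrow> 'c topology \<Rightarrow> 'c \<Rightarrow> ('a \<Rightarrow> 'b)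
     \<Rightarrow> ('a \<times> 'c) set \<Rightarrow> ('b \<times> 'c) set" where
  "smash_id_map X x0 Y y0 T t0 a =
     restrict (\<lambda>c. let p = (SOME p. p \<in> c) in
                  collapse_cls (smash_base Y y0 T t0) (a (fst p), snd p))
       (topspace (smash_top X x0 T t0))"

definition wr_top :: "'u topology \<Rightarrow> 'a topology \<Rightarrow> 'a \<Rightarrow> ('u \<times> 'a) set topology" where
  "wr_top U X x0 = collapse_top (prod_topology U X) (topspace U \<times> {x0})"

definition wr_base :: "'u topology \<Rightarrow> 'a \<Rightarrow> ('u \<times> 'a) set" where
  "wr_base U x0 = topspace U \<times> {x0}"

text \<open>The map #^X(w)(u wr x) = w(u)(x).\<close>
definition hash_map :: "'u topology \<Rightarrow> 'a topology \<Rightarrow> 'a \<Rightarrow> ('u \<Rightarrow> 'a \<Rightarrow> 'b) \<Rightarrow> ('u \<times> 'a) set \<Rightarrow> 'b" where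
  "hash_map U X x0 w = restrict (\<lambda>c. let p = (SOME p. p \<in> c) in w (fst p) (snd p)) (topspace (wr_top U X x0))"

definition based_maps :: "'a topology \<Rightarrow> 'a \<Rightarrow> 'b topology \<Rightarrow> 'b \<Rightarrow> ('a \<Rightarrow> 'b) set" where
  "based_maps X x0 Y y0 = {f. based_map X x0 Y y0 f \<and> f \<in> extensional (topspace X)}"

definition unbased_maps :: "'u topology \<Rightarrow> 'v topology \<Rightarrow> ('u \<Rightarrow> 'v) set" where
  "unbased_maps U V = {f. continuous_map U V f \<and> f \<in> extensional (topspace U)}"

definition CO_top :: "'a topology \<Rightarrow> 'a \<Rightarrow> 'b topology \<Rightarrow> 'b \<Rightarrow> ('a \<Rightarrow> 'b) topology" where
  "CO_top X x0 Y y0 = topology_generated_by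
     {{f \<in> based_maps X x0 Y y0. f ` K \<subseteq> V} | K V. compactin X K \<and> openin Y V}"

definition frag_restrict :: "'a set \<Rightarrow> (('a \<Rightarrow> 'b) \<Rightarrow>\<^sub>0 int) \<Rightarrow> (('a \<Rightarrow> 'b) \<Rightarrow>\<^sub>0 int)" where
  "frag_restrict R V = frag_extend (\<lambda>w. frag_of (restrict w R)) V"

definition Fin_pts :: "'a topology \<Rightarrow> 'a \<Rightarrow> nat \<Rightarrow> 'a set set" where
  "Fin_pts X x0 n = {R. finite R \<and> R \<subseteq> topspace X \<and> x0 \<in> R \<and> card R \<le> n + 1}"

text \<open>The filtration <Y^X>^(s) (for s = 0, F_{-1} is empty, so everything).\<close>
definition filt :: "'a topology \<Rightarrow> 'a \<Rightarrow> 'b topology \<Rightarrow> 'b \<Rightarrow> nat \<Rightarrow> (('a \<Rightarrow> 'b) \<Rightarrow>\<^sub>0 int) set" where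
  "filt X x0 Y y0 s = {V \<in> carrier (free_Abelian_group (based_maps X x0 Y y0)).
      0 < s \<longrightarrow> (\<forall>R \<in> Fin_pts X x0 (s - 1). frag_restrict R V = 0)}"

definition filt_hash :: "'u topology \<Rightarrow> 'a topology \<Rightarrow> 'a \<Rightarrow> 'b topology \<Rightarrow> 'b \<Rightarrow> nat
    \<Rightarrow> (('u \<Rightarrow> 'a \<Rightarrow> 'b) \<Rightarrow>\<^sub>0 int) set" where
  "filt_hash U X x0 Y y0 s = {V \<in> carrier (free_Abelian_group (unbased_maps U (CO_top X x0 Y y0))).
      frag_extend (\<lambda>w. frag_of (hash_map U X x0 w)) V \<in> filt (wr_top U X x0) (wr_base U x0) Y y0 s}"

text \<open>Gluing a family of maps g F defined on the (pairwise disjoint) faces of the F in A.\<close>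
definition glue :: "nat set set \<Rightarrow> (nat set \<Rightarrow> (nat \<Rightarrow> real) \<Rightarrow> 'v) \<Rightarrow> (nat \<Rightarrow> real) \<Rightarrow> 'v" where
  "glue A g = (\<lambda>u. if \<exists>F\<in>A. u \<in> simplex_set F
                    then g (SOME F. F \<in> A \<and> u \<in> simplex_set F) u else undefined)"

definition comb_prod :: "nat set set \<Rightarrow> (nat set \<Rightarrow> (((nat \<Rightarrow> real) \<Rightarrow> 'v) \<Rightarrow>\<^sub>0 int))
    \<Rightarrow> (((nat \<Rightarrow> real) \<Rightarrow> 'v) \<Rightarrow>\<^sub>0 int)" where
  "comb_prod A S = (\<Sum>g \<in> Pi\<^sub>E A (\<lambda>F. Poly_Mapping.keys (S F)).
       frag_cmul (\<Prod>F\<in>A. poly_mapping.lookup (S F) (g F)) (frag_of (glue A g)))"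

definition layout :: "nat set \<Rightarrow> nat set set \<Rightarrow> bool" where
  "layout E A \<longleftrightarrow> (\<forall>F\<in>A. F \<subseteq> E \<and> F \<noteq> {}) \<and> (\<forall>F\<in>A. \<forall>G\<in>A. F \<noteq> G \<longrightarrow> F \<inter> G = {})"

definition fissile :: "nat set \<Rightarrow> (((nat \<Rightarrow> real) \<Rightarrow> 'v) \<Rightarrow>\<^sub>0 int) \<Rightarrow> bool" where
  "fissile E S \<longleftrightarrow> (\<forall>A. layout E A \<longrightarrow>
      frag_restrict (\<Union>F\<in>A. simplex_set F) S = comb_prod A (\<lambda>F. frag_restrict (simplex_set F) S))"

definition const_map :: "nat set \<Rightarrow> 'v \<Rightarrow> (nat \<Rightarrow> real) \<Rightarrow> 'v" where
  "const_map E v = restrict (\<lambda>u. v) (simplex_set E)"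

definition r_approx :: "nat \<Rightarrow> 'a topology \<Rightarrow> 'a \<Rightarrow> 'b topology \<Rightarrow> 'b
    \<Rightarrow> ('a \<Rightarrow> 'b) \<Rightarrow> ('a \<Rightarrow> 'b) \<Rightarrow> bool" where
  "r_approx r X x0 Y y0 a b \<longleftrightarrow>
     (\<forall>E. finite E \<and> E \<noteq> {} \<longrightarrow>
        (\<exists>S. S \<in> carrier (free_Abelian_group
                   (unbased_maps (simplex_top E)
                      (subtopology (CO_top X x0 Y y0)
                         (path_component_of_set (CO_top X x0 Y y0) (restrict a (topspace X)))))) \<and>
             fissile E S \<and>
             frag_of (const_map E (restrict b (topspace X))) - S \<in> filt_hash (simplex_top E) X x0 Y y0 (Suc r)))"

end

theory Submission
  imports Defs
begin



definition pf :: "('a \<Rightarrow> 'b) \<Rightarrow> ('a \<Rightarrow>\<^sub>0 int) \<Rightarrow> ('b \<Rightarrow>\<^sub>0 int)" where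
  "pf h V = frag_extend (\<lambda>w. frag_of (h w)) V"

lemma pf_diff: "pf h (a - b) = pf h a - pf h b"
  by (simp add: pf_def frag_extend_diff)

lemma pf_of [simp]: "pf h (frag_of a) = frag_of (h a)"
  by (simp add: pf_def)

lemma pf_0 [simp]: "pf h 0 = 0"
  by (simp add: pf_def)

lemma pf_compose: "pf f (pf g V) = pf (f \<circ> g) V"
  unfolding pf_def using frag_extend_compose[of "\<lambda>w. frag_of (f w)" g V]
  by (simp add: o_def)

lemma pf_cong: "(\<And>w. w \<in> Poly_Mapping.keys V \<Longrightarrow> f w = g w) \<Longrightarrow> pf f V = pf g V"
  unfolding pf_def by (rule frag_extend_eq) simp

lemma frag_restrict_pf: "frag_restrict R V = pf (\<lambda>w. restrict w R) V"
  by (simp add: frag_restrict_def pf_def)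

lemma keys_pf: "Poly_Mapping.keys (pf h V) \<subseteq> h ` Poly_Mapping.keys V"
  unfolding pf_def using keys_frag_extend[of "\<lambda>w. frag_of (h w)" V]
  by (auto simp: keys_frag_of)

lemma lookup_pf: "poly_mapping.lookup (pf h V) k = (\<Sum>w\<in>{w\<in>Poly_Mapping.keys V. h w = k}. poly_mapping.lookup V w)"
proof -
  have "poly_mapping.lookup (pf h V) k = (\<Sum>w\<in>Poly_Mapping.keys V. poly_mapping.lookup V w * (if k = h w then 1 else 0))"
    unfolding pf_def frag_extend_def by (simp add: lookup_sum)
  also have "\<dots> = (\<Sum>w\<in>Poly_Mapping.keys V. if h w = k then poly_mapping.lookup V w else 0)"
    by (rule sum.cong) auto
  also have "\<dots> = (\<Sum>w\<in>{w\<in>Poly_Mapping.keys V. h w = k}. poly_mapping.lookup V w)"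
    by (simp add: sum.inter_filter)
  finally show ?thesis .
qed

lemma keys_pf_inj:
  assumes "inj_on h (Poly_Mapping.keys V)"
  shows "Poly_Mapping.keys (pf h V) = h ` Poly_Mapping.keys V"
proof
  show "Poly_Mapping.keys (pf h V) \<subseteq> h ` Poly_Mapping.keys V" by (rule keys_pf)
  show "h ` Poly_Mapping.keys V \<subseteq> Poly_Mapping.keys (pf h V)"
  proof
    fix k assume "k \<in> h ` Poly_Mapping.keys V"
    then obtain w where w: "w \<in> Poly_Mapping.keys V" "k = h w" by auto
    have "{v\<in>Poly_Mapping.keys V. h v = k} = {w}" using w assms by (auto simp: inj_on_def)
    then have "poly_mapping.lookup (pf h V) k = poly_mapping.lookup V w" by (simp add: lookup_pf)
    then show "k \<in> Poly_Mapping.keys (pf h V)" using w by (simp add: in_keys_iff)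
  qed
qed

lemma frag_cmul_sum_left: "frag_cmul (sum f I) x = (\<Sum>i\<in>I. frag_cmul (f i) x)"
proof (induction I rule: infinite_finite_induct)
  case (insert i I) then show ?case by (simp add: frag_cmul_distrib)
qed auto

lemma pf_sum: "finite I \<Longrightarrow> pf h (\<Sum>i\<in>I. g i) = (\<Sum>i\<in>I. pf h (g i))"
  unfolding pf_def by (simp add: frag_extend_sum o_def)

lemma pf_cmul: "pf h (frag_cmul c x) = frag_cmul c (pf h x)"
  unfolding pf_def by (simp add: frag_extend_cmul)

lemma glue_restrict: "glue A (restrict g A) = glue A g"
proof
  fix u show "glue A (restrict g A) u = glue A g u"
  proof (cases "\<exists>F\<in>A. u \<in> simplex_set F")
    case True
    then have "(SOME F. F \<in> A \<and> u \<in> simplex_set F) \<in> A" by (metis (mono_tags, lifting) someI_ex)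
    then show ?thesis using True by (simp add: glue_def)
  qed (simp add: glue_def)
qed

lemma comb_prod_gen:
  assumes A: "finite A" and B: "\<And>F. F \<in> A \<Longrightarrow> finite (B F) \<and> Poly_Mapping.keys (S F) \<subseteq> B F"
  shows "comb_prod A S = (\<Sum>g \<in> Pi\<^sub>E A B.
       frag_cmul (\<Prod>F\<in>A. poly_mapping.lookup (S F) (g F)) (frag_of (glue A g)))"
  unfolding comb_prod_def
proof (rule sum.mono_neutral_left)
  show "finite (Pi\<^sub>E A B)" using A B by (simp add: finite_PiE)
  show "Pi\<^sub>E A (\<lambda>F. Poly_Mapping.keys (S F)) \<subseteq> Pi\<^sub>E A B" using B by (auto simp: PiE_iff)
  show "\<forall>i\<in>Pi\<^sub>E A B - Pi\<^sub>E A (\<lambda>F. Poly_Mapping.keys (S F)).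
        frag_cmul (\<Prod>F\<in>A. poly_mapping.lookup (S F) (i F)) (frag_of (glue A i)) = 0"
  proof
    fix g assume g: "g \<in> Pi\<^sub>E A B - Pi\<^sub>E A (\<lambda>F. Poly_Mapping.keys (S F))"
    then obtain F where "F \<in> A" "g F \<notin> Poly_Mapping.keys (S F)" by (auto simp: PiE_iff)
    then have "(\<Prod>F\<in>A. poly_mapping.lookup (S F) (g F)) = 0" using A
      by (metis (no_types, lifting) in_keys_iff prod_zero_iff)
    then show "frag_cmul (\<Prod>F\<in>A. poly_mapping.lookup (S F) (g F)) (frag_of (glue A g)) = 0" by simp
  qed
qed

lemma comb_prod_cong: "(\<And>F. F \<in> A \<Longrightarrow> S F = S' F) \<Longrightarrow> comb_prod A S = comb_prod A S'"
  unfolding comb_prod_def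
  by (rule sum.cong) (auto intro!: PiE_cong prod.cong)

lemma comb_prod_pf:
  assumes A: "finite A" and H: "\<And>g. H (glue A g) = glue A (\<lambda>F. h F (g F))"
  shows "comb_prod A (\<lambda>F. pf (h F) (S F)) = pf H (comb_prod A S)"
proof -
  define K where "K F = Poly_Mapping.keys (S F)" for F
  define B' where "B' F = h F ` K F" for F
  define c where "c F w = poly_mapping.lookup (S F) w" for F w
  define C where "C g' F = {w\<in>K F. h F w = g' F}" for g' F
  define \<rho> where "\<rho> g = restrict (\<lambda>F. h F (g F)) A" for g
  define T where "T g = frag_cmul (\<Prod>F\<in>A. c F (g F)) (frag_of (glue A (\<lambda>F. h F (g F))))" for g
  have finK: "finite (K F)" for F by (simp add: K_def)
  have finPK: "finite (Pi\<^sub>E A K)" using A finK by (simp add: finite_PiE)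
  have finB': "finite (Pi\<^sub>E A B')" using A finK by (simp add: finite_PiE B'_def)
  have "comb_prod A (\<lambda>F. pf (h F) (S F)) = (\<Sum>g' \<in> Pi\<^sub>E A B'.
       frag_cmul (\<Prod>F\<in>A. poly_mapping.lookup (pf (h F) (S F)) (g' F)) (frag_of (glue A g')))"
    by (rule comb_prod_gen) (use A finK keys_pf in \<open>auto simp: B'_def K_def intro: keys_pf[THEN subsetD]\<close>)
  also have "\<dots> = (\<Sum>g' \<in> Pi\<^sub>E A B'. sum T {g \<in> Pi\<^sub>E A K. \<rho> g = g'})"
  proof (rule sum.cong[OF refl])
    fix g' assume g': "g' \<in> Pi\<^sub>E A B'"
    have eqset: "{g \<in> Pi\<^sub>E A K. \<rho> g = g'} = Pi\<^sub>E A (C g')"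
      using g' by (auto simp: PiE_iff C_def \<rho>_def fun_eq_iff extensional_def)
    have "(\<Prod>F\<in>A. poly_mapping.lookup (pf (h F) (S F)) (g' F)) = (\<Prod>F\<in>A. \<Sum>w\<in>C g' F. c F w)"
      by (simp add: lookup_pf C_def c_def K_def)
    also have "\<dots> = (\<Sum>g\<in>Pi\<^sub>E A (C g'). \<Prod>F\<in>A. c F (g F))"
      by (rule prod_sum_PiE) (use A finK in \<open>auto simp: C_def\<close>)
    finally have "frag_cmul (\<Prod>F\<in>A. poly_mapping.lookup (pf (h F) (S F)) (g' F)) (frag_of (glue A g'))
        = (\<Sum>g\<in>Pi\<^sub>E A (C g'). frag_cmul (\<Prod>F\<in>A. c F (g F)) (frag_of (glue A g')))"
      by (simp add: frag_cmul_sum_left)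
    also have "\<dots> = (\<Sum>g\<in>Pi\<^sub>E A (C g'). T g)"
    proof (rule sum.cong[OF refl])
      fix g assume "g \<in> Pi\<^sub>E A (C g')"
      then have "g' = \<rho> g" using eqset by auto
      then have "glue A g' = glue A (\<lambda>F. h F (g F))" by (simp add: \<rho>_def glue_restrict)
      then show "frag_cmul (\<Prod>F\<in>A. c F (g F)) (frag_of (glue A g')) = T g" by (simp add: T_def)
    qed
    finally show "frag_cmul (\<Prod>F\<in>A. poly_mapping.lookup (pf (h F) (S F)) (g' F)) (frag_of (glue A g'))
        = sum T {g \<in> Pi\<^sub>E A K. \<rho> g = g'}" using eqset by simp
  qed
  also have "\<dots> = sum T (Pi\<^sub>E A K)"
    by (rule sum.group[OF finPK finB']) (auto simp: \<rho>_def B'_def PiE_iff)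
  also have "\<dots> = pf H (comb_prod A S)"
  proof -
    have Kf: "(\<lambda>F. Poly_Mapping.keys (S F)) = K" by (simp add: K_def fun_eq_iff)
    show ?thesis unfolding comb_prod_def Kf
      by (simp add: pf_sum finPK pf_cmul T_def H c_def)
  qed
  finally show ?thesis .
qed




lemma istopology_quotient:
  "istopology (\<lambda>U. U \<subseteq> q ` topspace X \<and> openin X {x \<in> topspace X. q x \<in> U})"
proof -
  have 1: "openin X {x \<in> topspace X. q x \<in> S \<inter> T}"
    if "openin X {x \<in> topspace X. q x \<in> S}" "openin X {x \<in> topspace X. q x \<in> T}" for S T
  proof -
    have "{x \<in> topspace X. q x \<in> S \<inter> T} = {x \<in> topspace X. q x \<in> S} \<inter> {x \<in> topspace X. q x \<in> T}"
      by auto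
    then show ?thesis using that by auto
  qed
  have 2: "openin X {x \<in> topspace X. q x \<in> \<Union>\<K>}"
    if "\<forall>K\<in>\<K>. openin X {x \<in> topspace X. q x \<in> K}" for \<K>
  proof -
    have "{x \<in> topspace X. q x \<in> \<Union>\<K>} = (\<Union>K\<in>\<K>. {x \<in> topspace X. q x \<in> K})" by auto
    then show ?thesis using that by auto
  qed
  show ?thesis unfolding istopology_def using 1 2 by blast
qed

lemma openin_quotient_top:
  "openin (quotient_top X q) U \<longleftrightarrow> U \<subseteq> q ` topspace X \<and> openin X {x \<in> topspace X. q x \<in> U}"
  unfolding quotient_top_def by (simp add: istopology_quotient)

lemma topspace_quotient_top [simp]: "topspace (quotient_top X q) = q ` topspace X"
proof -
  have e: "{x \<in> topspace X. q x \<in> q ` topspace X} = topspace X" by auto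
  have "openin (quotient_top X q) (q ` topspace X)"
    unfolding openin_quotient_top e by simp
  then have 1: "q ` topspace X \<subseteq> topspace (quotient_top X q)" by (rule openin_subset)
  have 2: "topspace (quotient_top X q) \<subseteq> q ` topspace X"
    using openin_topspace[of "quotient_top X q"] unfolding openin_quotient_top by blast
  show ?thesis using 1 2 by blast
qed

lemma quotient_map_quotient_top: "quotient_map X (quotient_top X q) q"
  unfolding quotient_map_def by (auto simp: openin_quotient_top)

lemma continuous_map_quotient_top: "continuous_map X (quotient_top X q) q"
  by (rule quotient_imp_continuous_map[OF quotient_map_quotient_top])

lemma compact_space_quotient_top:
  assumes "compact_space X" shows "compact_space (quotient_top X q)"
  using image_compactin[OF assms[unfolded compact_space_def] continuous_map_quotient_top]
  by (simp add: compact_space_def)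

lemma collapse_eq_iff: "collapse_cls A x = collapse_cls A y \<longleftrightarrow> x = y \<or> (x \<in> A \<and> y \<in> A)"
  unfolding collapse_cls_def by auto

lemma collapse_eq_A: "collapse_cls A x = A \<longleftrightarrow> x \<in> A"
  unfolding collapse_cls_def by auto

lemma some_collapse_notin: "x \<notin> A \<Longrightarrow> (SOME p. p \<in> collapse_cls A x) = x"
  unfolding collapse_cls_def by simp

lemma some_collapse_in: "x \<in> A \<Longrightarrow> (SOME p. p \<in> collapse_cls A x) \<in> A"
  using someI[of "\<lambda>p. p \<in> A" x] by (simp add: collapse_cls_def)

lemma topspace_collapse_top [simp]: "topspace (collapse_top X A) = collapse_cls A ` topspace X"
  by (simp add: collapse_top_def)

lemma continuous_map_collapse: "continuous_map X (collapse_top X A) (collapse_cls A)"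
  by (simp add: collapse_top_def continuous_map_quotient_top)

lemma openin_collapse_saturated:
  assumes Ov: "openin X Ov" and sat: "A \<subseteq> Ov \<or> A \<inter> Ov = {}"
  shows "openin (collapse_top X A) (collapse_cls A ` Ov)"
proof -
  have Osub: "Ov \<subseteq> topspace X" using Ov openin_subset by auto
  have "{x \<in> topspace X. collapse_cls A x \<in> collapse_cls A ` Ov} = Ov"
    using sat Osub by (auto simp: collapse_eq_iff)
  then show ?thesis
    unfolding collapse_top_def openin_quotient_top using Ov Osub by auto
qed

lemma Hausdorff_collapse:
  assumes cpt: "compact_space X" and H: "Hausdorff_space X" and A: "closedin X A"
  shows "Hausdorff_space (collapse_top X A)"
proof -
  have reg: "regular_space X" using cpt H by (rule compact_Hausdorff_imp_regular_space)
  have Asub: "A \<subseteq> topspace X" using A closedin_subset by auto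
  have disj: "disjnt (collapse_cls A ` P1) (collapse_cls A ` P2)"
    if "disjnt P1 P2" "A \<subseteq> P1 \<or> A \<inter> P1 = {}" "A \<subseteq> P2 \<or> A \<inter> P2 = {}" for P1 P2
    using that unfolding disjnt_def by (auto simp: collapse_eq_iff; blast)
  have sep: "\<exists>U V. openin X U \<and> openin X V \<and> x \<in> U \<and> y \<in> V \<and> disjnt U V
      \<and> (A \<subseteq> U \<or> A \<inter> U = {}) \<and> (A \<subseteq> V \<or> A \<inter> V = {})"
    if xy: "x \<in> topspace X" "y \<in> topspace X" "\<not> (x = y \<or> (x \<in> A \<and> y \<in> A))" "y \<notin> A" for x y
  proof (cases "x \<in> A")
    case True
    obtain V U where "openin X U" "openin X V" "y \<in> U" "A \<subseteq> V" "disjnt U V"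
      using reg xy A unfolding regular_space_def by (metis Diff_iff)
    then show ?thesis
      by (rule_tac x=V in exI, rule_tac x=U in exI) (use True in \<open>auto simp: disjnt_def\<close>)
  next
    case False
    obtain U V where UV: "openin X U" "openin X V" "x \<in> U" "y \<in> V" "disjnt U V"
      using H xy unfolding Hausdorff_space_def by metis
    show ?thesis
      by (rule_tac x="U - A" in exI, rule_tac x="V - A" in exI)
        (use UV False xy A in \<open>auto simp: disjnt_def intro!: openin_diff\<close>)
  qed
  show ?thesis
    unfolding Hausdorff_space_def
  proof (intro allI impI)
    fix c d assume cd: "c \<in> topspace (collapse_top X A) \<and> d \<in> topspace (collapse_top X A) \<and> c \<noteq> d"
    then obtain x y where x: "x \<in> topspace X" and cx: "c = collapse_cls A x"
      and y: "y \<in> topspace X" and dy: "d = collapse_cls A y" by auto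
    have ne: "collapse_cls A x \<noteq> collapse_cls A y" using cd cx dy by simp
    then have ne': "\<not> (x = y \<or> (x \<in> A \<and> y \<in> A))" by (simp add: collapse_eq_iff)
    show "\<exists>U V. openin (collapse_top X A) U \<and> openin (collapse_top X A) V \<and>
                c \<in> U \<and> d \<in> V \<and> disjnt U V"

    proof (cases "y \<in> A")
      case False
      then obtain U V where UV: "openin X U" "openin X V" "x \<in> U" "y \<in> V" "disjnt U V"
        "A \<subseteq> U \<or> A \<inter> U = {}" "A \<subseteq> V \<or> A \<inter> V = {}"
        using sep[OF x y ne'] by blast
      show ?thesis
        by (rule_tac x="collapse_cls A ` U" in exI, rule_tac x="collapse_cls A ` V" in exI)
          (use UV disj cx dy in \<open>auto intro!: openin_collapse_saturated\<close>)
    next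
      case True
      then have "x \<notin> A" using ne' by auto
      then obtain U V where UV: "openin X U" "openin X V" "y \<in> U" "x \<in> V" "disjnt U V"
        "A \<subseteq> U \<or> A \<inter> U = {}" "A \<subseteq> V \<or> A \<inter> V = {}"
        using sep[OF y x] ne' by blast
      show ?thesis
        by (rule_tac x="collapse_cls A ` V" in exI, rule_tac x="collapse_cls A ` U" in exI)
          (use UV disj cx dy in \<open>auto intro!: openin_collapse_saturated simp: disjnt_sym\<close>)
    qed
  qed
qed

lemma compact_collapse: "compact_space X \<Longrightarrow> compact_space (collapse_top X A)"
  by (simp add: collapse_top_def compact_space_quotient_top)




lemma smash_base_closed:
  assumes "Hausdorff_space X" "Hausdorff_space T" "x0 \<in> topspace X" "t0 \<in> topspace T"
  shows "closedin (prod_topology X T) (smash_base X x0 T t0)"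
  unfolding smash_base_def
  using assms by (intro closedin_Un) (auto simp: closedin_prod_Times_iff closedin_Hausdorff_singleton)

lemma smash_Hausdorff:
  assumes "compact_space X" "compact_space T" "Hausdorff_space X" "Hausdorff_space T"
    "x0 \<in> topspace X" "t0 \<in> topspace T"
  shows "Hausdorff_space (smash_top X x0 T t0)"
  unfolding smash_top_def
  by (rule Hausdorff_collapse)
    (use assms in \<open>auto simp: compact_space_prod_topology Hausdorff_space_prod_topology
       intro: smash_base_closed\<close>)

lemma smash_compact:
  assumes "compact_space X" "compact_space T"
  shows "compact_space (smash_top X x0 T t0)"
  unfolding smash_top_def
  by (rule compact_collapse) (use assms in \<open>auto simp: compact_space_prod_topology\<close>)

lemma topspace_smash: "topspace (smash_top X x0 T t0) =
   collapse_cls (smash_base X x0 T t0) ` (topspace X \<times> topspace T)"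
  by (simp add: smash_top_def)

lemma smash_value:
  assumes f: "continuous_map X Y f" "f x0 = y0" and x: "x \<in> topspace X" and t: "t \<in> topspace T"
  shows "smash_id_map X x0 Y y0 T t0 f (collapse_cls (smash_base X x0 T t0) (x,t))
       = collapse_cls (smash_base Y y0 T t0) (f x, t)"
proof -
  let ?c = "collapse_cls (smash_base X x0 T t0) (x,t)"
  have c: "?c \<in> topspace (smash_top X x0 T t0)" using x t by (simp add: topspace_smash)
  have fx: "f z \<in> topspace Y" if "z \<in> topspace X" for z
    using f(1) that by (metis continuous_map_image_subset_topspace image_subset_iff)
  show ?thesis
  proof (cases "(x,t) \<in> smash_base X x0 T t0")
    case True
    define p where "p = (SOME p. p \<in> ?c)"
    have p: "p \<in> smash_base X x0 T t0" unfolding p_def using True by (rule some_collapse_in)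
    have 1: "(f (fst p), snd p) \<in> smash_base Y y0 T t0"
      using p fx f by (auto simp: smash_base_def)
    have 2: "(f x, t) \<in> smash_base Y y0 T t0"
      using True fx f t by (auto simp: smash_base_def)
    show ?thesis using c 1 2 unfolding smash_id_map_def
      by (simp add: p_def[symmetric] Let_def collapse_eq_iff)
  next
    case False
    show ?thesis using c unfolding smash_id_map_def
      by (simp add: some_collapse_notin[OF False] Let_def)
  qed
qed

lemma smash_id_based:
  assumes f: "f \<in> based_maps X x0 Y y0" and x0: "x0 \<in> topspace X" and t0: "t0 \<in> topspace T"
  shows "smash_id_map X x0 Y y0 T t0 f \<in> based_maps (smash_top X x0 T t0) (smash_base X x0 T t0)
            (smash_top Y y0 T t0) (smash_base Y y0 T t0)"
proof -
  have fc: "continuous_map X Y f" and f0: "f x0 = y0"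
    using f by (auto simp: based_maps_def based_map_def)
  let ?q = "collapse_cls (smash_base X x0 T t0)"
  let ?qY = "collapse_cls (smash_base Y y0 T t0)"
  have "continuous_map (prod_topology X T) (smash_top Y y0 T t0) (\<lambda>p. ?qY (f (fst p), snd p))"
    unfolding smash_top_def
    by (rule continuous_map_compose[OF _ continuous_map_collapse, unfolded o_def])
       (intro continuous_map_pairedI continuous_map_compose[OF continuous_map_fst fc, unfolded o_def]
          continuous_map_snd)
  then have "continuous_map (prod_topology X T) (smash_top Y y0 T t0) (smash_id_map X x0 Y y0 T t0 f \<circ> ?q)"
    by (rule continuous_map_eq) (auto simp: smash_value[OF fc f0])
  then have cont: "continuous_map (smash_top X x0 T t0) (smash_top Y y0 T t0) (smash_id_map X x0 Y y0 T t0 f)"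
    unfolding smash_top_def collapse_top_def
    by (simp add: continuous_compose_quotient_map_eq[OF quotient_map_quotient_top])
  have b0: "(x0,t0) \<in> smash_base X x0 T t0" "(y0,t0) \<in> smash_base Y y0 T t0"
    using x0 t0 by (auto simp: smash_base_def)
  have e1: "collapse_cls (smash_base X x0 T t0) (x0,t0) = smash_base X x0 T t0"
    using b0 by (simp add: collapse_eq_A)
  have e2: "collapse_cls (smash_base Y y0 T t0) (y0,t0) = smash_base Y y0 T t0"
    using b0 by (simp add: collapse_eq_A)
  have "smash_id_map X x0 Y y0 T t0 f (collapse_cls (smash_base X x0 T t0) (x0,t0))
      = collapse_cls (smash_base Y y0 T t0) (f x0, t0)"
    by (rule smash_value[OF fc f0 x0 t0])
  then have "smash_id_map X x0 Y y0 T t0 f (smash_base X x0 T t0) = smash_base Y y0 T t0"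
    using e1 e2 f0 by simp
  then show ?thesis using cont
    by (simp add: based_maps_def based_map_def smash_id_map_def)
qed

lemma topspace_CO: "topspace (CO_top X x0 Y y0) = based_maps X x0 Y y0"
  unfolding CO_top_def topology_generated_by_topspace
proof
  show "\<Union> {{f \<in> based_maps X x0 Y y0. f ` K \<subseteq> V} |K V. compactin X K \<and> openin Y V} \<subseteq> based_maps X x0 Y y0"
    by auto
  have "based_maps X x0 Y y0 \<in> {{f \<in> based_maps X x0 Y y0. f ` K \<subseteq> V} |K V. compactin X K \<and> openin Y V}"
    by (rule CollectI, rule exI[where x="{}"], rule exI[where x="{}"]) auto
  then show "based_maps X x0 Y y0 \<subseteq> \<Union> {{f \<in> based_maps X x0 Y y0. f ` K \<subseteq> V} |K V. compactin X K \<and> openin Y V}"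
    by blast
qed

lemma openin_CO_basic:
  "compactin X K \<Longrightarrow> openin Y V \<Longrightarrow> openin (CO_top X x0 Y y0) {f \<in> based_maps X x0 Y y0. f ` K \<subseteq> V}"
  unfolding CO_top_def by (rule topology_generated_by_Basis) blast

lemma CO_tube:
  assumes cpt: "compact_space X" and Haus: "Hausdorff_space X"
    and L: "compactin (prod_topology X T) L" and Wo: "openin (prod_topology Y T) W"
  shows "openin (CO_top X x0 Y y0) {f \<in> based_maps X x0 Y y0. \<forall>p\<in>L. (f (fst p), snd p) \<in> W}"
proof (subst openin_subopen, intro ballI)
  fix f assume fS: "f \<in> {f \<in> based_maps X x0 Y y0. \<forall>p\<in>L. (f (fst p), snd p) \<in> W}"
  then have fb: "f \<in> based_maps X x0 Y y0" and fW: "\<forall>p\<in>L. (f (fst p), snd p) \<in> W" by auto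
  have fc: "continuous_map X Y f" using fb by (simp add: based_maps_def based_map_def)
  have nb: "neighbourhood_base_of (\<lambda>C. compactin X C \<and> closedin X C) X"
    using locally_compact_regular_space_neighbourhood_base compact_imp_locally_compact_space[OF cpt]
      compact_Hausdorff_imp_regular_space[OF cpt Haus] by blast
  have Lsub: "L \<subseteq> topspace X \<times> topspace T" using L compactin_subset_topspace by fastforce
  have "\<forall>p\<in>L. \<exists>V1 V2 N K. openin Y V1 \<and> openin T V2 \<and> openin X N \<and> compactin X K \<and>
        fst p \<in> N \<and> snd p \<in> V2 \<and> N \<subseteq> K \<and> f ` K \<subseteq> V1 \<and> V1 \<times> V2 \<subseteq> W"
  proof
    fix p assume p: "p \<in> L"
    obtain x t where pxt: "p = (x,t)" by fastforce
    have fxtW: "(f x, t) \<in> W" using fW p pxt by auto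
    have "\<exists>U V. openin Y U \<and> openin T V \<and> f x \<in> U \<and> t \<in> V \<and> U \<times> V \<subseteq> W"
      by (rule Wo[unfolded openin_prod_topology_alt, rule_format, OF fxtW])
    then obtain V1 V2 where V: "openin Y V1" "openin T V2" "f x \<in> V1" "t \<in> V2" "V1 \<times> V2 \<subseteq> W"
      by blast
    have x: "x \<in> topspace X" using Lsub p pxt by auto
    have op: "openin X {z \<in> topspace X. f z \<in> V1}" using fc V(1) by (rule openin_continuous_map_preimage)
    have xin: "x \<in> {z \<in> topspace X. f z \<in> V1}" using x V(3) by simp
    obtain N K where NK: "openin X N" "compactin X K \<and> closedin X K" "x \<in> N" "N \<subseteq> K"
        "K \<subseteq> {z \<in> topspace X. f z \<in> V1}"
      using nb[unfolded neighbourhood_base_of, rule_format, OF conjI[OF op xin]] by blast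
    have "f ` K \<subseteq> V1" using NK(5) by blast
    then show "\<exists>V1 V2 N K. openin Y V1 \<and> openin T V2 \<and> openin X N \<and> compactin X K \<and>
        fst p \<in> N \<and> snd p \<in> V2 \<and> N \<subseteq> K \<and> f ` K \<subseteq> V1 \<and> V1 \<times> V2 \<subseteq> W"
      using V NK pxt by (intro exI[of _ V1] exI[of _ V2] exI[of _ N] exI[of _ K]) simp
  qed
  note h0 = this
  obtain V1 where h1: "\<forall>p\<in>L. \<exists>V2 N K. openin Y (V1 p) \<and> openin T V2 \<and> openin X N \<and> compactin X K \<and>
        fst p \<in> N \<and> snd p \<in> V2 \<and> N \<subseteq> K \<and> f ` K \<subseteq> V1 p \<and> V1 p \<times> V2 \<subseteq> W"
    using bchoice[OF h0] by blast
  obtain V2 where h2: "\<forall>p\<in>L. \<exists>N K. openin Y (V1 p) \<and> openin T (V2 p) \<and> openin X N \<and> compactin X K \<and>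
        fst p \<in> N \<and> snd p \<in> V2 p \<and> N \<subseteq> K \<and> f ` K \<subseteq> V1 p \<and> V1 p \<times> V2 p \<subseteq> W"
    using bchoice[OF h1] by blast
  obtain N where h3: "\<forall>p\<in>L. \<exists>K. openin Y (V1 p) \<and> openin T (V2 p) \<and> openin X (N p) \<and> compactin X K \<and>
        fst p \<in> N p \<and> snd p \<in> V2 p \<and> N p \<subseteq> K \<and> f ` K \<subseteq> V1 p \<and> V1 p \<times> V2 p \<subseteq> W"
    using bchoice[OF h2] by blast
  obtain K where h4: "\<forall>p\<in>L. openin Y (V1 p) \<and> openin T (V2 p) \<and> openin X (N p) \<and> compactin X (K p) \<and>
        fst p \<in> N p \<and> snd p \<in> V2 p \<and> N p \<subseteq> K p \<and> f ` K p \<subseteq> V1 p \<and> V1 p \<times> V2 p \<subseteq> W"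
    using bchoice[OF h3] by blast
  have VNK: "\<And>p. p \<in> L \<Longrightarrow> openin Y (V1 p) \<and> openin T (V2 p) \<and> openin X (N p) \<and>
      compactin X (K p) \<and> fst p \<in> N p \<and> snd p \<in> V2 p \<and> N p \<subseteq> K p \<and> f ` K p \<subseteq> V1 p \<and> V1 p \<times> V2 p \<subseteq> W"
    using h4 by blast
  have "L \<subseteq> \<Union> ((\<lambda>p. N p \<times> V2 p) ` L)"
  proof
    fix p assume "p \<in> L" then show "p \<in> \<Union> ((\<lambda>p. N p \<times> V2 p) ` L)"
      using VNK[of p] by (cases p) auto
  qed
  moreover have "\<forall>B\<in>(\<lambda>p. N p \<times> V2 p) ` L. openin (prod_topology X T) B"
    using VNK by (auto simp: openin_prod_Times_iff)
  ultimately obtain \<V> where \<V>: "finite \<V>" "\<V> \<subseteq> (\<lambda>p. N p \<times> V2 p) ` L" "L \<subseteq> \<Union>\<V>"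
    using L[unfolded compactin_def, THEN conjunct2, rule_format, of "(\<lambda>p. N p \<times> V2 p) ` L"] by blast
  then obtain P where P: "P \<subseteq> L" "finite P" "\<V> = (\<lambda>p. N p \<times> V2 p) ` P"
    using finite_subset_image[OF \<V>(1,2)] by blast
  define Ov where "Ov = \<Inter> (insert (based_maps X x0 Y y0) ((\<lambda>p. {g \<in> based_maps X x0 Y y0. g ` K p \<subseteq> V1 p}) ` P))"
  have "openin (CO_top X x0 Y y0) Ov"
    unfolding Ov_def
  proof (rule openin_Inter)
    show "finite (insert (based_maps X x0 Y y0) ((\<lambda>p. {g \<in> based_maps X x0 Y y0. g ` K p \<subseteq> V1 p}) ` P))"
      using P by simp
    fix S assume "S \<in> insert (based_maps X x0 Y y0) ((\<lambda>p. {g \<in> based_maps X x0 Y y0. g ` K p \<subseteq> V1 p}) ` P)"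
    then show "openin (CO_top X x0 Y y0) S"
      using VNK P(1) openin_topspace[of "CO_top X x0 Y y0"] by (auto simp: topspace_CO intro!: openin_CO_basic)
  qed simp
  moreover have "f \<in> Ov" unfolding Ov_def using fb VNK P(1) by auto
  moreover have "Ov \<subseteq> {f \<in> based_maps X x0 Y y0. \<forall>p\<in>L. (f (fst p), snd p) \<in> W}"
  proof
    fix g assume g: "g \<in> Ov"
    then have gb: "g \<in> based_maps X x0 Y y0" by (simp add: Ov_def)
    have "(g (fst q), snd q) \<in> W" if q: "q \<in> L" for q
    proof -
      obtain p where p: "p \<in> P" "q \<in> N p \<times> V2 p" using \<V> P q by blast
      have pL: "p \<in> L" using p P by auto
      have "g ` K p \<subseteq> V1 p" using g p by (auto simp: Ov_def)
      then have "g (fst q) \<in> V1 p" using p VNK[OF pL] by (cases q) auto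
      moreover have "snd q \<in> V2 p" using p by (cases q) auto
      ultimately show ?thesis using VNK[OF pL] by blast
    qed
    then show "g \<in> {f \<in> based_maps X x0 Y y0. \<forall>p\<in>L. (f (fst p), snd p) \<in> W}" using gb by auto
  qed
  ultimately show "\<exists>T'. openin (CO_top X x0 Y y0) T' \<and> f \<in> T' \<and>
      T' \<subseteq> {f \<in> based_maps X x0 Y y0. \<forall>p\<in>L. (f (fst p), snd p) \<in> W}" by blast
qed




lemma Union_CO_basis:
  "\<Union> {{f \<in> based_maps X x0 Y y0. f ` K \<subseteq> V} |K V. compactin X K \<and> openin Y V} = based_maps X x0 Y y0"
  using topspace_CO[of X x0 Y y0] unfolding CO_top_def topology_generated_by_topspace .

lemma smash_id_CO_cont:
  assumes cX: "compact_space X" and cT: "compact_space T" and hX: "Hausdorff_space X"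
    and hT: "Hausdorff_space T" and x0: "x0 \<in> topspace X" and t0: "t0 \<in> topspace T"
  shows "continuous_map (CO_top X x0 Y y0)
     (CO_top (smash_top X x0 T t0) (smash_base X x0 T t0) (smash_top Y y0 T t0) (smash_base Y y0 T t0))
     (smash_id_map X x0 Y y0 T t0)"
proof -
  let ?Z = "smash_top X x0 T t0" and ?z0 = "smash_base X x0 T t0"
  let ?Y' = "smash_top Y y0 T t0" and ?y0' = "smash_base Y y0 T t0"
  let ?\<Phi> = "smash_id_map X x0 Y y0 T t0"
  let ?qX = "collapse_cls (smash_base X x0 T t0)"
  let ?qY = "collapse_cls (smash_base Y y0 T t0)"
  have hZ: "Hausdorff_space ?Z" using assms by (rule smash_Hausdorff)
  have cXT: "compact_space (prod_topology X T)" using cX cT by (simp add: compact_space_prod_topology)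
  have "continuous_map (CO_top X x0 Y y0)
      (topology_generated_by {{f \<in> based_maps ?Z ?z0 ?Y' ?y0'. f ` K \<subseteq> V} |K V. compactin ?Z K \<and> openin ?Y' V}) ?\<Phi>"
  proof (rule continuous_on_generated_topo)
    show "?\<Phi> ` topspace (CO_top X x0 Y y0) \<subseteq>
        \<Union> {{f \<in> based_maps ?Z ?z0 ?Y' ?y0'. f ` K \<subseteq> V} |K V. compactin ?Z K \<and> openin ?Y' V}"
    proof -
      have "?\<Phi> ` based_maps X x0 Y y0 \<subseteq> based_maps ?Z ?z0 ?Y' ?y0'"
        by (rule image_subsetI, rule smash_id_based[OF _ x0 t0])
      then show ?thesis by (simp only: Union_CO_basis topspace_CO)
    qed
  next
    fix U assume "U \<in> {{f \<in> based_maps ?Z ?z0 ?Y' ?y0'. f ` K \<subseteq> V} |K V. compactin ?Z K \<and> openin ?Y' V}"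
    then have "\<exists>K V. U = {f \<in> based_maps ?Z ?z0 ?Y' ?y0'. f ` K \<subseteq> V} \<and> compactin ?Z K \<and> openin ?Y' V"
      by (simp only: mem_Collect_eq)
    then obtain K V where U: "U = {f \<in> based_maps ?Z ?z0 ?Y' ?y0'. f ` K \<subseteq> V}"
      and K: "compactin ?Z K" and V: "openin ?Y' V" by blast
    define L where "L = {p \<in> topspace (prod_topology X T). ?qX p \<in> K}"
    define Wv where "Wv = {p \<in> topspace (prod_topology Y T). ?qY p \<in> V}"
    have "closedin ?Z K" using hZ K by (rule compactin_imp_closedin)
    then have "closedin (prod_topology X T) L"
      unfolding L_def smash_top_def by (rule closedin_continuous_map_preimage[OF continuous_map_collapse])
    then have Lc: "compactin (prod_topology X T) L" using cXT by (simp add: closedin_compact_space)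
    have Wo: "openin (prod_topology Y T) Wv"
      unfolding Wv_def using V unfolding smash_top_def by (rule openin_continuous_map_preimage[OF continuous_map_collapse])
    have Ksub: "K \<subseteq> ?qX ` (topspace X \<times> topspace T)"
      using compactin_subset_topspace[OF K] by (simp add: topspace_smash)
    have eq: "?\<Phi> -` U \<inter> topspace (CO_top X x0 Y y0) = {f \<in> based_maps X x0 Y y0. \<forall>p\<in>L. (f (fst p), snd p) \<in> Wv}"
    proof (rule Set.set_eqI, rule iffI)
      fix f assume f: "f \<in> ?\<Phi> -` U \<inter> topspace (CO_top X x0 Y y0)"
      then have fb: "f \<in> based_maps X x0 Y y0" by (simp add: topspace_CO)
      then have fc: "continuous_map X Y f" and f0: "f x0 = y0" by (auto simp: based_maps_def based_map_def)
      have fK: "?\<Phi> f ` K \<subseteq> V" using f U by auto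
      have "(f (fst p), snd p) \<in> Wv" if p: "p \<in> L" for p
      proof -
        obtain x t where pxt: "p = (x,t)" by fastforce
        have xt: "x \<in> topspace X" "t \<in> topspace T" "?qX (x,t) \<in> K" using p pxt by (auto simp: L_def)
        have "?qY (f x, t) \<in> V" using fK xt smash_value[OF fc f0 xt(1,2)] by auto
        moreover have "f x \<in> topspace Y" using fc xt(1)
          by (metis continuous_map_image_subset_topspace image_subset_iff)
        ultimately show ?thesis using pxt xt by (simp add: Wv_def)
      qed
      then show "f \<in> {f \<in> based_maps X x0 Y y0. \<forall>p\<in>L. (f (fst p), snd p) \<in> Wv}" using fb by blast
    next
      fix f assume f: "f \<in> {f \<in> based_maps X x0 Y y0. \<forall>p\<in>L. (f (fst p), snd p) \<in> Wv}"
      then have fb: "f \<in> based_maps X x0 Y y0" and fL: "\<forall>p\<in>L. (f (fst p), snd p) \<in> Wv" by auto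
      then have fc: "continuous_map X Y f" and f0: "f x0 = y0" by (auto simp: based_maps_def based_map_def)
      have "?\<Phi> f ` K \<subseteq> V"
      proof
        fix k assume "k \<in> ?\<Phi> f ` K"
        then obtain k' where k': "k' \<in> K" "k = ?\<Phi> f k'" by auto
        then obtain x t where xt: "x \<in> topspace X" "t \<in> topspace T" "k' = ?qX (x,t)" using Ksub by auto
        have "(x,t) \<in> L" using xt k' by (simp add: L_def)
        then have "(f x, t) \<in> Wv" using fL by auto
        then show "k \<in> V" using k' xt smash_value[OF fc f0 xt(1,2)] by (simp add: Wv_def)
      qed
      then show "f \<in> ?\<Phi> -` U \<inter> topspace (CO_top X x0 Y y0)"
        using U fb smash_id_based[OF fb x0 t0] by (simp add: topspace_CO)
    qed
    show "openin (CO_top X x0 Y y0) (?\<Phi> -` U \<inter> topspace (CO_top X x0 Y y0))"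
      unfolding eq by (rule CO_tube[OF cX hX Lc Wo])
  qed
  then show ?thesis unfolding CO_top_def[of ?Z ?z0 ?Y' ?y0'] .
qed

lemma topspace_wr: "topspace (wr_top U X x0) = collapse_cls (topspace U \<times> {x0}) ` (topspace U \<times> topspace X)"
  by (simp add: wr_top_def)

lemma hash_value:
  assumes "u \<in> topspace U" "x \<in> topspace X" "x \<noteq> x0"
  shows "hash_map U X x0 w (collapse_cls (topspace U \<times> {x0}) (u,x)) = w u x"
proof -
  have n: "(u,x) \<notin> topspace U \<times> {x0}" using assms by auto
  have "collapse_cls (topspace U \<times> {x0}) (u,x) \<in> topspace (wr_top U X x0)"
    using assms by (simp add: topspace_wr)
  then show ?thesis unfolding hash_map_def by (simp add: some_collapse_notin[OF n])
qed

lemma hash_base: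
  assumes "u \<in> topspace U" "x0 \<in> topspace X" "\<forall>u\<in>topspace U. w u x0 = c"
  shows "hash_map U X x0 w (topspace U \<times> {x0}) = c"
proof -
  have i: "(u,x0) \<in> topspace U \<times> {x0}" using assms by auto
  have e: "collapse_cls (topspace U \<times> {x0}) (u,x0) = topspace U \<times> {x0}" using i by (simp add: collapse_eq_A)
  have "collapse_cls (topspace U \<times> {x0}) (u,x0) \<in> topspace (wr_top U X x0)"
    using assms by (simp add: topspace_wr)
  then have B: "topspace U \<times> {x0} \<in> topspace (wr_top U X x0)" using e by simp
  have "(SOME p. p \<in> topspace U \<times> {x0}) \<in> topspace U \<times> {x0}"
    using some_collapse_in[OF i] e by simp
  then show ?thesis using B assms unfolding hash_map_def
    by (auto simp: Let_def)
qed




lemma topspace_simplex_top [simp]: "topspace (simplex_top E) = simplex_set E"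
  by (simp add: simplex_top_def)

lemma Hausdorff_simplex: "Hausdorff_space (simplex_top E)"
  unfolding simplex_top_def
  by (rule Hausdorff_space_subtopology) (simp add: Hausdorff_space_product_topology)

lemma compact_simplex:
  assumes E: "finite E"
  shows "compact_space (simplex_top E)"
proof -
  let ?P = "powertop_real (UNIV::nat set)"
  define K where "K = (\<Pi>\<^sub>E i\<in>(UNIV::nat set). if i \<in> E then {0..1::real} else {0})"
  have Kc: "compactin ?P K"
    unfolding K_def compactin_PiE by (auto simp: compact_Icc)
  have sub: "simplex_set E \<subseteq> K"
  proof
    fix t assume t: "t \<in> simplex_set E"
    have "t i \<le> 1" if "i \<in> E" for i
    proof -
      have "t i \<le> sum t E" using t that E by (intro member_le_sum) (auto simp: simplex_set_def)
      then show ?thesis using t by (simp add: simplex_set_def)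
    qed
    then show "t \<in> K" using t by (auto simp: K_def simplex_set_def PiE_iff)
  qed
  have proj: "continuous_map ?P euclideanreal (\<lambda>t. t i)" for i
    using continuous_map_product_projection[of i UNIV "\<lambda>_. euclideanreal"] by simp
  have top: "topspace ?P = UNIV" by auto
  have cU: "closedin ?P UNIV" using closedin_topspace[of ?P] unfolding top .
  have c1: "closedin ?P (if i \<in> E then UNIV else {t. t i = 0})" for i
  proof (cases "i \<in> E")
    case False
    have "closedin ?P {t \<in> topspace ?P. t i \<in> {0}}"
      by (rule closedin_continuous_map_preimage[OF proj]) (simp add: closed_closedin[symmetric])
    then show ?thesis using False by simp
  qed (use cU in simp)
  have c2: "closedin ?P (if i \<in> E then {t. 0 \<le> t i} else UNIV)" for i
  proof (cases "i \<in> E")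
    case True
    have "closedin ?P {t \<in> topspace ?P. t i \<in> {0..}}"
      by (rule closedin_continuous_map_preimage[OF proj]) (simp add: closed_closedin[symmetric])
    then show ?thesis using True by simp
  qed (use cU in simp)
  have c3: "closedin ?P {t. sum t E = 1}"
  proof -
    have "continuous_map ?P euclideanreal (\<lambda>t. \<Sum>i\<in>E. t i)"
      by (rule continuous_map_sum[OF E proj])
    then have "closedin ?P {t \<in> topspace ?P. (\<lambda>t. \<Sum>i\<in>E. t i) t \<in> {1}}"
      by (rule closedin_continuous_map_preimage) (simp add: closed_closedin[symmetric])
    then show ?thesis by simp
  qed
  have eq: "simplex_set E = (\<Inter>i. if i \<in> E then UNIV else {t. t i = 0}) \<inter>
      (\<Inter>i. if i \<in> E then {t. 0 \<le> t i} else UNIV) \<inter> {t. sum t E = 1}"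
    by (auto simp: simplex_set_def split: if_splits)
  have "closedin ?P (simplex_set E)"
    unfolding eq using c1 c2 c3 by (intro closedin_Int closedin_INT) auto
  then have "compactin ?P (simplex_set E)" using Kc sub closed_compactin by blast
  then show ?thesis unfolding simplex_top_def by (rule compact_space_subtopology)
qed

lemma unbased_based_value:
  assumes "w \<in> unbased_maps U (CO_top X x0 Y y0)" "u \<in> topspace U"
  shows "w u \<in> based_maps X x0 Y y0"
proof -
  have "continuous_map U (CO_top X x0 Y y0) w" using assms by (simp add: unbased_maps_def)
  then have "w u \<in> topspace (CO_top X x0 Y y0)" using assms(2)
    by (metis continuous_map_image_subset_topspace image_subset_iff)
  then show ?thesis by (simp add: topspace_CO)
qed

lemma hash_inj: "inj_on (hash_map U X x0) (unbased_maps U (CO_top X x0 Y y0))"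
proof (rule inj_onI)
  fix w w' assume w: "w \<in> unbased_maps U (CO_top X x0 Y y0)" and w': "w' \<in> unbased_maps U (CO_top X x0 Y y0)"
    and eq: "hash_map U X x0 w = hash_map U X x0 w'"
  show "w = w'"
  proof
    fix u show "w u = w' u"
    proof (cases "u \<in> topspace U")
      case False then show ?thesis using w w' by (simp add: unbased_maps_def extensional_def)
    next
      case u: True
      have b: "w u \<in> based_maps X x0 Y y0" "w' u \<in> based_maps X x0 Y y0"
        using unbased_based_value[OF w u] unbased_based_value[OF w' u] by auto
      show ?thesis
      proof
        fix x show "w u x = w' u x"
        proof (cases "x \<in> topspace X")
          case False then show ?thesis using b by (simp add: based_maps_def extensional_def)
        next
          case x: True
          show ?thesis
          proof (cases "x = x0")
            case True then show ?thesis using b by (simp add: based_maps_def based_map_def)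
          next
            case False
            then show ?thesis using hash_value[OF u x False, of w] hash_value[OF u x False, of w'] eq by simp
          qed
        qed
      qed
    qed
  qed
qed




definition psi :: "('x \<Rightarrow> 'y) \<Rightarrow> 'u set \<Rightarrow> ('u \<Rightarrow> 'x) \<Rightarrow> ('u \<Rightarrow> 'y)" where
  "psi F R w = restrict (\<lambda>u. F (w u)) R"

lemma psi_unbased:
  assumes F: "continuous_map C C' F" and w: "w \<in> unbased_maps U C"
  shows "psi F (topspace U) w \<in> unbased_maps U C'"
proof -
  have "continuous_map U C w" using w by (simp add: unbased_maps_def)
  then have "continuous_map U C' (F \<circ> w)" using F by (rule continuous_map_compose)
  then have "continuous_map U C' (psi F (topspace U) w)"
    by (rule continuous_map_eq) (simp add: psi_def)
  then show ?thesis by (simp add: unbased_maps_def psi_def)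
qed

lemma psi_unbased_sub:
  assumes F: "continuous_map C C' F" and FS: "F ` S \<subseteq> S'" and w: "w \<in> unbased_maps U (subtopology C S)"
  shows "psi F (topspace U) w \<in> unbased_maps U (subtopology C' S')"
proof -
  have "continuous_map U (subtopology C S) w" using w by (simp add: unbased_maps_def)
  then have wc: "continuous_map U C w" and wS: "w ` topspace U \<subseteq> S"
    by (auto simp: continuous_map_in_subtopology)
  have "continuous_map U C' (F \<circ> w)" using F wc by (rule continuous_map_compose[rotated])
  then have "continuous_map U C' (psi F (topspace U) w)"
    by (rule continuous_map_eq) (simp add: psi_def)
  moreover have "psi F (topspace U) w ` topspace U \<subseteq> S'" using wS FS by (auto simp: psi_def)
  ultimately have "continuous_map U (subtopology C' S') (psi F (topspace U) w)"
    by (auto simp: continuous_map_in_subtopology)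
  then show ?thesis by (simp add: unbased_maps_def psi_def)
qed

lemma hash_smash:
  fixes U :: "'u topology" and X :: "'a topology" and Y :: "'b topology" and T :: "'c topology"
  assumes cU: "compact_space U" and hU: "Hausdorff_space U" and u0: "u0 \<in> topspace U"
    and cX: "compact_space X" and cT: "compact_space T" and hX: "Hausdorff_space X"
    and hT: "Hausdorff_space T" and x0: "x0 \<in> topspace X" and t0: "t0 \<in> topspace T"
    and w: "w \<in> unbased_maps U (CO_top X x0 Y y0)"
    and hw: "hash_map U X x0 w \<in> based_maps (wr_top U X x0) (wr_base U x0) Y y0"
  shows "hash_map U (smash_top X x0 T t0) (smash_base X x0 T t0)
            (psi (smash_id_map X x0 Y y0 T t0) (topspace U) w)
         \<in> based_maps (wr_top U (smash_top X x0 T t0) (smash_base X x0 T t0)) (wr_base U (smash_base X x0 T t0))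
              (smash_top Y y0 T t0) (smash_base Y y0 T t0)"
proof -
  define Z where "Z = smash_top X x0 T t0"
  define z0 where "z0 = smash_base X x0 T t0"
  define Y' where "Y' = smash_top Y y0 T t0"
  define y0' where "y0' = smash_base Y y0 T t0"
  define \<Phi> where "\<Phi> = smash_id_map X x0 Y y0 T t0"
  define B where "B = topspace U \<times> {z0}"
  define BX where "BX = topspace U \<times> {x0}"
  define qX where "qX = collapse_cls z0"
  define qY where "qY = collapse_cls y0'"
  define h where "h = hash_map U X x0 w"
  define h' where "h' = hash_map U Z z0 (psi \<Phi> (topspace U) w)"
  have Zdef: "Z = collapse_top (prod_topology X T) z0" by (simp add: Z_def z0_def smash_top_def)
  have Y'def: "Y' = collapse_top (prod_topology Y T) y0'" by (simp add: Y'_def y0'_def smash_top_def)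
  have wb: "w u \<in> based_maps X x0 Y y0" if "u \<in> topspace U" for u
    using unbased_based_value[OF w that] .
  have wc: "continuous_map X Y (w u)" "w u x0 = y0" if "u \<in> topspace U" for u
    using wb[OF that] by (auto simp: based_maps_def based_map_def)
  have \<Phi>b: "\<Phi> (w u) \<in> based_maps Z z0 Y' y0'" if "u \<in> topspace U" for u
    unfolding \<Phi>_def Z_def z0_def Y'_def y0'_def using smash_id_based[OF wb[OF that] x0 t0] .
  have z0in: "(x0,t0) \<in> z0" using x0 t0 by (simp add: z0_def smash_base_def)
  have z0eq: "qX (x0,t0) = z0" using z0in by (simp add: qX_def collapse_eq_A)
  have z0top: "z0 \<in> topspace Z" using x0 t0 z0eq by (auto simp: Zdef qX_def)
  have hB: "h' B = y0'"
    unfolding h'_def B_def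
  proof (rule hash_base[OF u0 z0top])
    show "\<forall>u\<in>topspace U. psi \<Phi> (topspace U) w u z0 = y0'"
      using \<Phi>b by (simp add: psi_def based_maps_def based_map_def)
  qed
  have hBX: "h BX = y0"
    unfolding h_def BX_def by (rule hash_base[OF u0 x0]) (use wc in simp)
  have hc: "continuous_map (wr_top U X x0) Y h" using hw by (simp add: h_def based_maps_def based_map_def)
  have hY: "h p \<in> topspace Y" if "p \<in> topspace (wr_top U X x0)" for p
    using hc that by (metis continuous_map_image_subset_topspace image_subset_iff)
  define \<theta> where "\<theta> p = collapse_cls B (fst p, qX (snd p))" for p :: "'u \<times> 'a \<times> 'c"
  define G where "G p = qY (h (collapse_cls BX (fst p, fst (snd p))), snd (snd p))" for p :: "'u \<times> 'a \<times> 'c"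
  have hval: "h' (\<theta> (u,(x,t))) = G (u,(x,t))"
    if u: "u \<in> topspace U" and x: "x \<in> topspace X" and t: "t \<in> topspace T" for u x t
  proof (cases "(x,t) \<in> z0")
    case True
    then have "qX (x,t) = z0" by (simp add: qX_def collapse_eq_A)
    then have th: "\<theta> (u,(x,t)) = B" using u by (simp add: \<theta>_def B_def collapse_eq_A)
    have "G (u,(x,t)) = y0'"
    proof (cases "x = x0")
      case True
      then have "collapse_cls BX (u,x) = BX" using u by (simp add: BX_def collapse_eq_A)
      then have "G (u,(x,t)) = qY (y0, t)" by (simp add: G_def hBX)
      then show ?thesis using t by (simp add: qY_def y0'_def smash_base_def collapse_eq_A)
    next
      case False
      then have tt: "t = t0" using True by (auto simp: z0_def smash_base_def)
      have "collapse_cls BX (u,x) \<in> topspace (wr_top U X x0)" using u x by (simp add: topspace_wr BX_def)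
      then have "h (collapse_cls BX (u,x)) \<in> topspace Y" by (rule hY)
      then show ?thesis using tt by (simp add: G_def qY_def y0'_def smash_base_def collapse_eq_A)
    qed
    then show ?thesis using th hB by simp
  next
    case False
    then have xne: "x \<noteq> x0" using t by (auto simp: z0_def smash_base_def)
    have qne: "qX (x,t) \<noteq> z0" using False by (simp add: qX_def collapse_eq_A)
    have qtop: "qX (x,t) \<in> topspace Z" using x t by (auto simp: Zdef qX_def)
    have "h' (\<theta> (u,(x,t))) = psi \<Phi> (topspace U) w u (qX (x,t))"
      unfolding h'_def \<theta>_def B_def using hash_value[OF u qtop qne] by simp
    also have "\<dots> = \<Phi> (w u) (qX (x,t))" using u by (simp add: psi_def)
    also have "\<dots> = qY (w u x, t)"
      unfolding \<Phi>_def qX_def qY_def z0_def y0'_def by (rule smash_value[OF wc(1)[OF u] wc(2)[OF u] x t])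
    also have "\<dots> = G (u,(x,t))"
      unfolding G_def h_def BX_def using hash_value[OF u x xne, of w] by simp
    finally show ?thesis .
  qed
  have Gc: "continuous_map (prod_topology U (prod_topology X T)) Y' G"
  proof -
    have c1: "continuous_map (prod_topology U (prod_topology X T)) (wr_top U X x0)
        (\<lambda>p. collapse_cls BX (fst p, fst (snd p)))"
      unfolding wr_top_def BX_def
      by (rule continuous_map_compose[OF _ continuous_map_collapse, unfolded o_def])
        (intro continuous_map_pairedI continuous_map_fst
           continuous_map_compose[OF continuous_map_snd continuous_map_fst, unfolded o_def])
    have c2: "continuous_map (prod_topology U (prod_topology X T)) (prod_topology Y T)
        (\<lambda>p. (h (collapse_cls BX (fst p, fst (snd p))), snd (snd p)))"
      by (intro continuous_map_pairedI continuous_map_compose[OF c1 hc, unfolded o_def]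
           continuous_map_compose[OF continuous_map_snd continuous_map_snd, unfolded o_def])
    show ?thesis unfolding G_def qY_def Y'def
      by (rule continuous_map_compose[OF c2 continuous_map_collapse, unfolded o_def])
  qed
  have \<theta>c: "continuous_map (prod_topology U (prod_topology X T)) (wr_top U Z z0) \<theta>"
  proof -
    have "continuous_map (prod_topology U (prod_topology X T)) (prod_topology U Z) (\<lambda>p. (fst p, qX (snd p)))"
      unfolding Zdef qX_def
      by (intro continuous_map_pairedI continuous_map_fst
           continuous_map_compose[OF continuous_map_snd continuous_map_collapse, unfolded o_def])
    then show ?thesis unfolding wr_top_def \<theta>_def B_def
      by (rule continuous_map_compose[OF _ continuous_map_collapse, unfolded o_def])
  qed
  have \<theta>im: "\<theta> ` topspace (prod_topology U (prod_topology X T)) = topspace (wr_top U Z z0)"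
  proof
    show "\<theta> ` topspace (prod_topology U (prod_topology X T)) \<subseteq> topspace (wr_top U Z z0)"
      using \<theta>c by (rule continuous_map_image_subset_topspace)
    show "topspace (wr_top U Z z0) \<subseteq> \<theta> ` topspace (prod_topology U (prod_topology X T))"
    proof
      fix c assume "c \<in> topspace (wr_top U Z z0)"
      then obtain u z where uz: "u \<in> topspace U" "z \<in> topspace Z" "c = collapse_cls B (u,z)"
        by (auto simp: topspace_wr B_def)
      then obtain x t where xt: "x \<in> topspace X" "t \<in> topspace T" "z = qX (x,t)"
        by (auto simp: Zdef qX_def)
      then have "c = \<theta> (u,(x,t))" using uz by (simp add: \<theta>_def)
      then show "c \<in> \<theta> ` topspace (prod_topology U (prod_topology X T))" using uz xt by auto
    qed
  qed
  have hZ: "Hausdorff_space Z" unfolding Z_def using cX cT hX hT x0 t0 by (rule smash_Hausdorff)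
  have cZ: "compact_space Z" unfolding Z_def using cX cT by (rule smash_compact)
  have hW: "Hausdorff_space (wr_top U Z z0)"
    unfolding wr_top_def
  proof (rule Hausdorff_collapse)
    show "compact_space (prod_topology U Z)" using cU cZ by (simp add: compact_space_prod_topology)
    show "Hausdorff_space (prod_topology U Z)" using hU hZ by (simp add: Hausdorff_space_prod_topology)
    show "closedin (prod_topology U Z) (topspace U \<times> {z0})"
      using z0top hZ by (simp add: closedin_prod_Times_iff closedin_Hausdorff_singleton)
  qed
  have cD: "compact_space (prod_topology U (prod_topology X T))"
    using cU cX cT by (simp add: compact_space_prod_topology)
  have qm: "quotient_map (prod_topology U (prod_topology X T)) (wr_top U Z z0) \<theta>"
    by (rule continuous_imp_quotient_map[OF \<theta>c cD hW \<theta>im])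
  have "continuous_map (prod_topology U (prod_topology X T)) Y' (h' \<circ> \<theta>)"
  proof (rule continuous_map_eq[OF Gc])
    fix p assume "p \<in> topspace (prod_topology U (prod_topology X T))"
    then obtain u x t where "p = (u,(x,t))" "u \<in> topspace U" "x \<in> topspace X" "t \<in> topspace T"
      by (cases p) auto
    then show "G p = (h' \<circ> \<theta>) p" using hval by simp
  qed
  then have h'c: "continuous_map (wr_top U Z z0) Y' h'"
    using continuous_compose_quotient_map_eq[OF qm] by blast
  have "h' (wr_base U z0) = y0'" using hB by (simp add: wr_base_def B_def)
  moreover have "h' \<in> extensional (topspace (wr_top U Z z0))" by (simp add: h'_def hash_map_def)
  ultimately show ?thesis using h'c
    by (simp add: based_maps_def based_map_def h'_def Z_def z0_def Y'_def y0'_def \<Phi>_def)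
qed




lemma simplex_mono: "F \<subseteq> E \<Longrightarrow> finite E \<Longrightarrow> simplex_set F \<subseteq> simplex_set E"
proof
  fix t assume FE: "F \<subseteq> E" and E: "finite E" and t: "t \<in> simplex_set F"
  have "sum t E = sum t F"
    by (rule sum.mono_neutral_right) (use FE E t in \<open>auto simp: simplex_set_def\<close>)
  then show "t \<in> simplex_set E" using t FE by (auto simp: simplex_set_def)
qed

lemma simplex_nonempty:
  assumes "finite E" "E \<noteq> {}" shows "\<exists>u. u \<in> simplex_set E"
proof -
  obtain e where e: "e \<in> E" using assms by auto
  have "sum (\<lambda>i. if i = e then 1 else 0::real) E = 1"
    using assms(1) e by (simp add: sum.delta)
  then show ?thesis using e by (rule_tac x="\<lambda>i. if i = e then 1 else 0" in exI) (auto simp: simplex_set_def)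
qed

lemma restrict_psi: "R \<subseteq> SE \<Longrightarrow> restrict (psi F SE w) R = psi F R (restrict w R)"
  by (auto simp: psi_def fun_eq_iff)

lemma frag_restrict_psi:
  "R \<subseteq> SE \<Longrightarrow> frag_restrict R (pf (psi F SE) S) = pf (psi F R) (frag_restrict R S)"
  unfolding frag_restrict_pf pf_compose by (simp add: o_def restrict_psi)

lemma psi_glue: "psi F (\<Union>G\<in>A. simplex_set G) (glue A g) = glue A (\<lambda>G. psi F (simplex_set G) (g G))"
proof
  fix u show "psi F (\<Union>G\<in>A. simplex_set G) (glue A g) u = glue A (\<lambda>G. psi F (simplex_set G) (g G)) u"
  proof (cases "\<exists>G\<in>A. u \<in> simplex_set G")
    case True
    define G0 where "G0 = (SOME G. G \<in> A \<and> u \<in> simplex_set G)"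
    have G0: "G0 \<in> A \<and> u \<in> simplex_set G0" unfolding G0_def using True by (metis (mono_tags, lifting) someI_ex)
    show ?thesis using True G0 by (simp add: glue_def psi_def G0_def[symmetric])
  next
    case False then show ?thesis by (simp add: glue_def psi_def)
  qed
qed

lemma fissile_pf:
  assumes E: "finite E" and S: "fissile E S"
  shows "fissile E (pf (psi F (simplex_set E)) S)"
  unfolding fissile_def
proof (intro allI impI)
  fix A assume A: "layout E A"
  have fA: "finite A" using A E unfolding layout_def
    by (metis Pow_iff finite_Pow_iff rev_finite_subset subsetI)
  have sub: "simplex_set G \<subseteq> simplex_set E" if "G \<in> A" for G
  proof -
    have "G \<subseteq> E" using A that by (simp add: layout_def)
    then show ?thesis using simplex_mono E by blast
  qed
  then have subU: "(\<Union>G\<in>A. simplex_set G) \<subseteq> simplex_set E" by blast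
  have "frag_restrict (\<Union>G\<in>A. simplex_set G) (pf (psi F (simplex_set E)) S)
      = pf (psi F (\<Union>G\<in>A. simplex_set G)) (frag_restrict (\<Union>G\<in>A. simplex_set G) S)"
    by (rule frag_restrict_psi[OF subU])
  also have "\<dots> = pf (psi F (\<Union>G\<in>A. simplex_set G)) (comb_prod A (\<lambda>G. frag_restrict (simplex_set G) S))"
    using S A unfolding fissile_def by simp
  also have "\<dots> = comb_prod A (\<lambda>G. pf (psi F (simplex_set G)) (frag_restrict (simplex_set G) S))"
    by (rule comb_prod_pf[symmetric, OF fA, where h="\<lambda>G. psi F (simplex_set G)" and H="psi F (\<Union>G\<in>A. simplex_set G)"])
      (rule psi_glue)
  also have "\<dots> = comb_prod A (\<lambda>G. frag_restrict (simplex_set G) (pf (psi F (simplex_set E)) S))"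
    by (rule comb_prod_cong) (simp add: frag_restrict_psi[OF sub])
  finally show "frag_restrict (\<Union>G\<in>A. simplex_set G) (pf (psi F (simplex_set E)) S) =
      comb_prod A (\<lambda>G. frag_restrict (simplex_set G) (pf (psi F (simplex_set E)) S))" .
qed

lemma cellular_basics:
  assumes "cellular_space X x0" shows "Hausdorff_space X" "x0 \<in> topspace X"
proof -
  show "Hausdorff_space X" using assms by (simp add: cellular_space_def)
  obtain C c where C: "cw_structure X C" "c \<in> C" "open_cell c = {x0}"
    using assms unfolding cellular_space_def by blast
  have "(\<Union>c\<in>C. open_cell c) = topspace X" using C(1) by (simp add: cw_structure_def)
  then show "x0 \<in> topspace X" using C by blast
qed

lemma smash_id_restrict:
  assumes x0: "x0 \<in> topspace X" and t0: "t0 \<in> topspace T"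
  shows "smash_id_map X x0 Y y0 T t0 (restrict f (topspace X)) = smash_id_map X x0 Y y0 T t0 f"
  unfolding smash_id_map_def
proof (rule restrict_ext)
  fix c assume "c \<in> topspace (smash_top X x0 T t0)"
  then obtain x t where xt: "x \<in> topspace X" "t \<in> topspace T" "c = collapse_cls (smash_base X x0 T t0) (x,t)"
    by (auto simp: topspace_smash)
  have "fst (SOME p. p \<in> c) \<in> topspace X"
  proof (cases "(x,t) \<in> smash_base X x0 T t0")
    case True
    then have "(SOME p. p \<in> c) \<in> smash_base X x0 T t0" using xt(3) some_collapse_in[OF True] by simp
    then show ?thesis using x0 by (auto simp: smash_base_def)
  next
    case False then show ?thesis using xt by (simp add: some_collapse_notin)
  qed
  then show "(let p = SOME p. p \<in> c in collapse_cls (smash_base Y y0 T t0) (restrict f (topspace X) (fst p), snd p)) =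
         (let p = SOME p. p \<in> c in collapse_cls (smash_base Y y0 T t0) (f (fst p), snd p))"
    by (simp add: Let_def)
qed

lemma restrict_smash_id: "restrict (smash_id_map X x0 Y y0 T t0 f) (topspace (smash_top X x0 T t0)) = smash_id_map X x0 Y y0 T t0 f"
  by (simp add: smash_id_map_def)




lemma filt_smash:
  fixes U :: "'u topology" and X :: "'a topology" and Y :: "'b topology" and T :: "'c topology"
  assumes cU: "compact_space U" and hU: "Hausdorff_space U" and u0: "u0 \<in> topspace U"
    and cX: "compact_space X" and cT: "compact_space T" and hX: "Hausdorff_space X"
    and hT: "Hausdorff_space T" and x0: "x0 \<in> topspace X" and t0: "t0 \<in> topspace T"
    and V: "V \<in> filt_hash U X x0 Y y0 s"
  shows "pf (psi (smash_id_map X x0 Y y0 T t0) (topspace U)) V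
     \<in> filt_hash U (smash_top X x0 T t0) (smash_base X x0 T t0) (smash_top Y y0 T t0) (smash_base Y y0 T t0) s"
proof -
  define Z where "Z = smash_top X x0 T t0"
  define z0 where "z0 = smash_base X x0 T t0"
  define Y' where "Y' = smash_top Y y0 T t0"
  define y0' where "y0' = smash_base Y y0 T t0"
  define \<Phi> where "\<Phi> = smash_id_map X x0 Y y0 T t0"
  define P where "P = psi \<Phi> (topspace U)"
  define hs where "hs = (hash_map U X x0 :: ('u \<Rightarrow> 'a \<Rightarrow> 'b) \<Rightarrow> _)"
  define hs' where "hs' = (hash_map U Z z0 :: ('u \<Rightarrow> ('a \<times> 'c) set \<Rightarrow> ('b \<times> 'c) set) \<Rightarrow> _)"
  define B where "B = topspace U \<times> {z0}"
  define BX where "BX = topspace U \<times> {x0}"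
  define qX where "qX = collapse_cls z0"
  define qY where "qY = collapse_cls y0'"
  have Zdef: "Z = collapse_top (prod_topology X T) z0" by (simp add: Z_def z0_def smash_top_def)
  have Vc: "Poly_Mapping.keys V \<subseteq> unbased_maps U (CO_top X x0 Y y0)"
    and Vh: "pf hs V \<in> filt (wr_top U X x0) (wr_base U x0) Y y0 s"
    using V by (auto simp: filt_hash_def pf_def hs_def free_Abelian_group_def)
  have keysH: "Poly_Mapping.keys (pf hs V) = hs ` Poly_Mapping.keys V"
    by (rule keys_pf_inj) (unfold hs_def, rule inj_on_subset[OF hash_inj Vc])
  have hb: "hs w \<in> based_maps (wr_top U X x0) (wr_base U x0) Y y0" if "w \<in> Poly_Mapping.keys V" for w
    using Vh keysH that by (auto simp: filt_def free_Abelian_group_def)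
  have \<Phi>c: "continuous_map (CO_top X x0 Y y0) (CO_top Z z0 Y' y0') \<Phi>"
    unfolding \<Phi>_def Z_def z0_def Y'_def y0'_def using cX cT hX hT x0 t0 by (rule smash_id_CO_cont)
  have Pu: "P w \<in> unbased_maps U (CO_top Z z0 Y' y0')" if "w \<in> Poly_Mapping.keys V" for w
    unfolding P_def using \<Phi>c Vc that by (blast intro: psi_unbased)
  have hb': "hs' (P w) \<in> based_maps (wr_top U Z z0) (wr_base U z0) Y' y0'" if w: "w \<in> Poly_Mapping.keys V" for w
    unfolding hs'_def P_def Z_def z0_def Y'_def y0'_def \<Phi>_def
    using hash_smash[OF cU hU u0 cX cT hX hT x0 t0 _ hb[OF w, unfolded hs_def]] Vc w by blast
  have carrier1: "pf P V \<in> carrier (free_Abelian_group (unbased_maps U (CO_top Z z0 Y' y0')))"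
    using keys_pf[of P V] Pu by (auto simp: free_Abelian_group_def)
  have comp: "frag_extend (\<lambda>w. frag_of (hs' w)) (pf P V) = pf (hs' \<circ> P) V"
    by (simp add: pf_def[symmetric] pf_compose)
  have carrier2: "pf (hs' \<circ> P) V \<in> carrier (free_Abelian_group (based_maps (wr_top U Z z0) (wr_base U z0) Y' y0'))"
    using keys_pf[of "hs' \<circ> P" V] hb' by (auto simp: free_Abelian_group_def)
  have restr: "frag_restrict R (pf (hs' \<circ> P) V) = 0"
    if s: "0 < s" and R: "R \<in> Fin_pts (wr_top U Z z0) (wr_base U z0) (s - 1)" for R
  proof -
    have Rfin: "finite R" and Rsub: "R \<subseteq> topspace (wr_top U Z z0)" and BR: "B \<in> R"
      and Rcard: "card R \<le> s - 1 + 1"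
      using R by (auto simp: Fin_pts_def wr_base_def B_def)
    define \<psi> where "\<psi> \<rho> = (if \<rho> = B then BX else
        collapse_cls BX (fst (SOME p. p \<in> \<rho>), fst (SOME q. q \<in> snd (SOME p. p \<in> \<rho>))))" for \<rho>
    define \<tau> where "\<tau> \<rho> = snd (SOME q. q \<in> snd (SOME p. p \<in> \<rho>))" for \<rho> :: "('u \<times> ('a \<times> 'c) set) set"
    define R' where "R' = \<psi> ` R"
    define Gf where "Gf k = restrict (\<lambda>\<rho>. if \<rho> = B then y0' else qY (k (\<psi> \<rho>), \<tau> \<rho>)) R"
      for k :: "('u \<times> 'a) set \<Rightarrow> 'b"
    have BXtop: "BX \<in> topspace (wr_top U X x0)"
    proof -
      have "collapse_cls BX (u0,x0) = BX" using u0 by (simp add: BX_def collapse_eq_A)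
      moreover have "collapse_cls BX (u0,x0) \<in> topspace (wr_top U X x0)"
        using u0 x0 by (simp add: topspace_wr BX_def)
      ultimately show ?thesis by simp
    qed
    have z0in: "(x0,t0) \<in> z0" using x0 t0 by (simp add: z0_def smash_base_def)
    have z0top: "z0 \<in> topspace Z"
    proof -
      have "qX (x0,t0) = z0" using z0in by (simp add: qX_def collapse_eq_A)
      then show ?thesis using x0 t0 by (auto simp: Zdef qX_def)
    qed
    have pts: "\<rho> = B \<or> (\<exists>u x t. u \<in> topspace U \<and> x \<in> topspace X \<and> t \<in> topspace T \<and>
                 (x,t) \<notin> z0 \<and> x \<noteq> x0 \<and> \<rho> = collapse_cls B (u, qX (x,t)) \<and> \<rho> \<noteq> B \<and>
                 \<psi> \<rho> = collapse_cls BX (u,x) \<and> \<tau> \<rho> = t \<and> qX (x,t) \<noteq> z0 \<and> qX (x,t) \<in> topspace Z)"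
      if \<rho>: "\<rho> \<in> topspace (wr_top U Z z0)" for \<rho>
    proof -
      obtain u z where uz: "u \<in> topspace U" "z \<in> topspace Z" "\<rho> = collapse_cls B (u,z)"
        using \<rho> by (auto simp: topspace_wr B_def)
      obtain x t where xt: "x \<in> topspace X" "t \<in> topspace T" "z = qX (x,t)"
        using uz(2) by (auto simp: Zdef qX_def)
      show ?thesis
      proof (cases "(x,t) \<in> z0")
        case True
        then have "z = z0" using xt by (simp add: qX_def collapse_eq_A)
        then have "\<rho> = B" using uz by (simp add: B_def collapse_eq_A)
        then show ?thesis by simp
      next
        case False
        have xne: "x \<noteq> x0" using False xt by (auto simp: z0_def smash_base_def)
        have zne: "z \<noteq> z0" using False xt by (simp add: qX_def collapse_eq_A)
        have uzB: "(u,z) \<notin> B" using zne by (simp add: B_def)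
        have rB: "\<rho> \<noteq> B" using uzB uz by (simp add: collapse_eq_A)
        have s1: "(SOME p. p \<in> \<rho>) = (u,z)" using uz(3) some_collapse_notin[OF uzB] by simp
        have s2: "(SOME q. q \<in> z) = (x,t)" using xt(3) some_collapse_notin[OF False] by (simp add: qX_def)
        have "\<psi> \<rho> = collapse_cls BX (u,x)" using rB s1 s2 by (simp add: \<psi>_def)
        moreover have "\<tau> \<rho> = t" using s1 s2 by (simp add: \<tau>_def)
        ultimately show ?thesis using uz xt False xne rB zne
          by (intro disjI2 exI[of _ u] exI[of _ x] exI[of _ t]) simp
      qed
    qed
    have R'sub: "R' \<subseteq> topspace (wr_top U X x0)"
    proof
      fix k assume "k \<in> R'"
      then obtain \<rho> where \<rho>: "\<rho> \<in> R" "k = \<psi> \<rho>" by (auto simp: R'_def)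
      then have "\<rho> \<in> topspace (wr_top U Z z0)" using Rsub by auto
      from pts[OF this] show "k \<in> topspace (wr_top U X x0)"
      proof
        assume "\<rho> = B" then show ?thesis using \<rho> BXtop by (simp add: \<psi>_def)
      next
        assume "\<exists>u x t. u \<in> topspace U \<and> x \<in> topspace X \<and> t \<in> topspace T \<and>
                 (x,t) \<notin> z0 \<and> x \<noteq> x0 \<and> \<rho> = collapse_cls B (u, qX (x,t)) \<and> \<rho> \<noteq> B \<and>
                 \<psi> \<rho> = collapse_cls BX (u,x) \<and> \<tau> \<rho> = t \<and> qX (x,t) \<noteq> z0 \<and> qX (x,t) \<in> topspace Z"
        then obtain u x where "u \<in> topspace U" "x \<in> topspace X" "\<psi> \<rho> = collapse_cls BX (u,x)" by blast
        then show ?thesis using \<rho> by (simp add: topspace_wr BX_def)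
      qed
    qed
    have R'F: "R' \<in> Fin_pts (wr_top U X x0) (wr_base U x0) (s - 1)"
    proof -
      have "BX \<in> R'" using BR by (force simp: R'_def \<psi>_def)
      moreover have "card R' \<le> s - 1 + 1" using Rcard card_image_le[OF Rfin, of \<psi>] by (simp add: R'_def)
      ultimately show ?thesis using Rfin R'sub by (simp add: Fin_pts_def R'_def wr_base_def BX_def)
    qed
    have zero: "frag_restrict R' (pf hs V) = 0" using Vh s R'F by (simp add: filt_def)
    have key: "restrict (hs' (P w)) R = Gf (restrict (hs w) R')" if w: "w \<in> Poly_Mapping.keys V" for w
    proof
      fix \<rho> show "restrict (hs' (P w)) R \<rho> = Gf (restrict (hs w) R') \<rho>"
      proof (cases "\<rho> \<in> R")
        case False then show ?thesis by (simp add: Gf_def)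
      next
        case True
        have wu: "w \<in> unbased_maps U (CO_top X x0 Y y0)" using Vc w by auto
        have wb: "w u \<in> based_maps X x0 Y y0" if "u \<in> topspace U" for u
          using unbased_based_value[OF wu that] .
        have wc: "continuous_map X Y (w u)" "w u x0 = y0" if "u \<in> topspace U" for u
          using wb[OF that] by (auto simp: based_maps_def based_map_def)
        have \<Phi>b: "\<Phi> (w u) \<in> based_maps Z z0 Y' y0'" if "u \<in> topspace U" for u
          unfolding \<Phi>_def Z_def z0_def Y'_def y0'_def using smash_id_based[OF wb[OF that] x0 t0] .
        have \<psi>R': "\<psi> \<rho> \<in> R'" using True by (simp add: R'_def)
        have "\<rho> \<in> topspace (wr_top U Z z0)" using True Rsub by auto
        from pts[OF this] show ?thesis
        proof
          assume rB: "\<rho> = B"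
          have "hs' (P w) B = y0'"
            unfolding hs'_def B_def
          proof (rule hash_base[OF u0 z0top])
            show "\<forall>u\<in>topspace U. P w u z0 = y0'"
              using \<Phi>b by (simp add: P_def psi_def based_maps_def based_map_def)
          qed
          then show ?thesis using rB True by (simp add: Gf_def)
        next
          assume "\<exists>u x t. u \<in> topspace U \<and> x \<in> topspace X \<and> t \<in> topspace T \<and>
                 (x,t) \<notin> z0 \<and> x \<noteq> x0 \<and> \<rho> = collapse_cls B (u, qX (x,t)) \<and> \<rho> \<noteq> B \<and>
                 \<psi> \<rho> = collapse_cls BX (u,x) \<and> \<tau> \<rho> = t \<and> qX (x,t) \<noteq> z0 \<and> qX (x,t) \<in> topspace Z"
          then obtain u x t where u: "u \<in> topspace U" and x: "x \<in> topspace X" and t: "t \<in> topspace T"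
            and xne: "x \<noteq> x0" and \<rho>eq: "\<rho> = collapse_cls B (u, qX (x,t))" and rB: "\<rho> \<noteq> B"
            and \<psi>eq: "\<psi> \<rho> = collapse_cls BX (u,x)" and \<tau>eq: "\<tau> \<rho> = t"
            and qne: "qX (x,t) \<noteq> z0" and qtop: "qX (x,t) \<in> topspace Z" by blast
          have "hs' (P w) \<rho> = P w u (qX (x,t))"
            unfolding hs'_def \<rho>eq B_def by (rule hash_value[OF u qtop qne])
          also have "\<dots> = \<Phi> (w u) (qX (x,t))" using u by (simp add: P_def psi_def)
          also have "\<dots> = qY (w u x, t)"
            unfolding \<Phi>_def qX_def qY_def z0_def y0'_def by (rule smash_value[OF wc(1)[OF u] wc(2)[OF u] x t])
          also have "\<dots> = qY (hs w (\<psi> \<rho>), \<tau> \<rho>)"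
            unfolding \<psi>eq \<tau>eq hs_def BX_def using hash_value[OF u x xne, of w] by simp
          finally show ?thesis using True rB \<psi>R' by (simp add: Gf_def)
        qed
      qed
    qed
    have "frag_restrict R (pf (hs' \<circ> P) V) = pf (\<lambda>w. restrict (hs' (P w)) R) V"
      by (simp add: frag_restrict_pf pf_compose o_def)
    also have "\<dots> = pf (\<lambda>w. Gf (restrict (hs w) R')) V"
      by (rule pf_cong) (simp add: key)
    also have "\<dots> = pf Gf (frag_restrict R' (pf hs V))"
      by (simp add: frag_restrict_pf pf_compose o_def)
    also have "\<dots> = 0" using zero by simp
    finally show ?thesis .
  qed
  have "pf (hs' \<circ> P) V \<in> filt (wr_top U Z z0) (wr_base U z0) Y' y0' s"
    using carrier2 restr by (simp add: filt_def)
  then show ?thesis using carrier1 comp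
    by (simp add: filt_hash_def hs'_def P_def Z_def z0_def Y'_def y0'_def \<Phi>_def)
qed




theorem corollary5p3:
  fixes X :: "'a topology" and Y :: "'b topology" and T :: "'c topology"
    and x0 :: 'a and y0 :: 'b and t0 :: 'c and r :: nat and a b :: "'a \<Rightarrow> 'b"
  assumes "cellular_space X x0" and "cellular_space Y y0" and "cellular_space T t0"
    and "compact_space X" and "compact_space T"
    and "based_map X x0 Y y0 a" and "based_map X x0 Y y0 b"
    and "r_approx r X x0 Y y0 a b"
  shows "r_approx r (smash_top X x0 T t0) (smash_base X x0 T t0)
                    (smash_top Y y0 T t0) (smash_base Y y0 T t0)
                    (smash_id_map X x0 Y y0 T t0 a) (smash_id_map X x0 Y y0 T t0 b)"
proof -
  have hX: "Hausdorff_space X" and x0: "x0 \<in> topspace X" using cellular_basics[OF assms(1)] by auto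
  have hT: "Hausdorff_space T" and t0: "t0 \<in> topspace T" using cellular_basics[OF assms(3)] by auto
  have cX: "compact_space X" and cT: "compact_space T" using assms(4,5) .
  define \<Phi> where "\<Phi> = smash_id_map X x0 Y y0 T t0"
  define Z where "Z = smash_top X x0 T t0"
  define z0 where "z0 = smash_base X x0 T t0"
  define Y' where "Y' = smash_top Y y0 T t0"
  define y0' where "y0' = smash_base Y y0 T t0"
  have \<Phi>c: "continuous_map (CO_top X x0 Y y0) (CO_top Z z0 Y' y0') \<Phi>"
    unfolding \<Phi>_def Z_def z0_def Y'_def y0'_def using cX cT hX hT x0 t0 by (rule smash_id_CO_cont)
  have \<Phi>r: "\<Phi> (restrict f (topspace X)) = \<Phi> f" for f
    unfolding \<Phi>_def using x0 t0 by (rule smash_id_restrict)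
  have r\<Phi>: "restrict (\<Phi> f) (topspace Z) = \<Phi> f" for f
    unfolding \<Phi>_def Z_def by (rule restrict_smash_id)
  show ?thesis
    unfolding r_approx_def \<Phi>_def[symmetric] Z_def[symmetric] z0_def[symmetric] Y'_def[symmetric] y0'_def[symmetric]
  proof (intro allI impI)
    fix E :: "nat set" assume E: "finite E \<and> E \<noteq> {}"
    obtain S where S1: "S \<in> carrier (free_Abelian_group (unbased_maps (simplex_top E)
                   (subtopology (CO_top X x0 Y y0)
                      (path_component_of_set (CO_top X x0 Y y0) (restrict a (topspace X))))))"
      and S2: "fissile E S"
      and S3: "frag_of (const_map E (restrict b (topspace X))) - S \<in> filt_hash (simplex_top E) X x0 Y y0 (Suc r)"
      using assms(8) E unfolding r_approx_def by blast
    define P where "P = psi \<Phi> (simplex_set E)"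
    have Pt: "psi \<Phi> (topspace (simplex_top E)) = P" by (simp add: P_def)
    define S' where "S' = pf P S"
    have pc: "\<Phi> ` path_component_of_set (CO_top X x0 Y y0) (restrict a (topspace X))
        \<subseteq> path_component_of_set (CO_top Z z0 Y' y0') (restrict (\<Phi> a) (topspace Z))"
    proof
      fix g assume "g \<in> \<Phi> ` path_component_of_set (CO_top X x0 Y y0) (restrict a (topspace X))"
      then obtain f where f: "path_component_of (CO_top X x0 Y y0) (restrict a (topspace X)) f" "g = \<Phi> f"
        by auto
      have "path_component_of (CO_top Z z0 Y' y0') (\<Phi> (restrict a (topspace X))) (\<Phi> f)"
        by (rule path_component_of_continuous_image[OF \<Phi>c f(1)])
      then show "g \<in> path_component_of_set (CO_top Z z0 Y' y0') (restrict (\<Phi> a) (topspace Z))"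
        using f(2) by (simp add: \<Phi>r r\<Phi>)
    qed
    have G1: "S' \<in> carrier (free_Abelian_group (unbased_maps (simplex_top E)
                   (subtopology (CO_top Z z0 Y' y0')
                      (path_component_of_set (CO_top Z z0 Y' y0') (restrict (\<Phi> a) (topspace Z))))))"
    proof -
      have "P w \<in> unbased_maps (simplex_top E) (subtopology (CO_top Z z0 Y' y0')
                      (path_component_of_set (CO_top Z z0 Y' y0') (restrict (\<Phi> a) (topspace Z))))"
        if "w \<in> Poly_Mapping.keys S" for w
        using psi_unbased_sub[OF \<Phi>c pc, of w "simplex_top E"] S1 that
        by (auto simp: free_Abelian_group_def P_def)
      then show ?thesis using keys_pf[of P S] by (auto simp: S'_def free_Abelian_group_def)
    qed
    have G2: "fissile E S'" unfolding S'_def P_def using E S2 by (blast intro: fissile_pf)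
    have ceq: "P (const_map E (restrict b (topspace X))) = const_map E (restrict (\<Phi> b) (topspace Z))"
      by (auto simp: P_def psi_def const_map_def \<Phi>r r\<Phi> fun_eq_iff)
    obtain u0 where u0: "u0 \<in> simplex_set E" using simplex_nonempty E by blast
    have "pf (psi \<Phi> (topspace (simplex_top E))) (frag_of (const_map E (restrict b (topspace X))) - S)
        \<in> filt_hash (simplex_top E) Z z0 Y' y0' (Suc r)"
      unfolding \<Phi>_def Z_def z0_def Y'_def y0'_def
      by (rule filt_smash[OF compact_simplex Hausdorff_simplex _ cX cT hX hT x0 t0 S3])
        (use E u0 in auto)
    then have G3: "frag_of (const_map E (restrict (\<Phi> b) (topspace Z))) - S' \<in> filt_hash (simplex_top E) Z z0 Y' y0' (Suc r)"
      using ceq by (simp add: pf_diff S'_def P_def)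
    show "\<exists>S. S \<in> carrier (free_Abelian_group (unbased_maps (simplex_top E)
                   (subtopology (CO_top Z z0 Y' y0')
                      (path_component_of_set (CO_top Z z0 Y' y0') (restrict (\<Phi> a) (topspace Z)))))) \<and>
             fissile E S \<and>
             frag_of (const_map E (restrict (\<Phi> b) (topspace Z))) - S \<in> filt_hash (simplex_top E) Z z0 Y' y0' (Suc r)"
      using G1 G2 G3 by blast
  qed
qed


end
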